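(* Let $\Gamma_1=\langle S_1\mid R_1\rangle$ and $\Gamma_2=\langle S_2\mid R_2\rangle$ be discrete groups such that the path metric on the Cayley graph $\mathrm{Cay}(\Gamma_i,S_i)$ is conditionally strictly negative definite for $i=1,2$. Then the path metric on $\mathrm{Cay}(\Gamma_1\ast\Gamma_2,S_1\cup S_2)$ is conditionally strictly negative definite.
   Context: $\Gamma_1\ast\Gamma_2$ is the free product of groups. $\mathrm{Cay}(\Gamma,S)$ is the graph with vertex set $\Gamma$ and edges $\{g,gs\}$, $s\in S\cup S^{-1}$, $gs\ne g$; its path metric is the shortest-path distance. A symmetric real function $K$ on $\Gamma\times\Gamma$ is conditionally strictly negative definite if for every finitely supported $\lambda\colon\Gamma\to\mathbb{C}$, $\lambda\neq0$, with $\sum_g\lambda(g)=0$ one has $\sum_{g,h}\lambda(g)\overline{\lambda(h)}K(g,h)<0$. *)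

theory Defs
  imports "HOL-Algebra.Generated_Groups" "HOL-Library.Complex_Order"
begin

definition fp_reduced :: "('a, 'c) monoid_scheme \<Rightarrow> ('b, 'd) monoid_scheme \<Rightarrow> ('a + 'b) list \<Rightarrow> bool" where
  "fp_reduced G H w \<longleftrightarrow>
     (\<forall>x \<in> set w. case x of Inl a \<Rightarrow> a \<in> carrier G \<and> a \<noteq> \<one>\<^bsub>G\<^esub>
                           | Inr b \<Rightarrow> b \<in> carrier H \<and> b \<noteq> \<one>\<^bsub>H\<^esub>) \<and>
     (\<forall>i. Suc i < length w \<longrightarrow> isl (w ! i) \<noteq> isl (w ! Suc i))"

fun fp_cons :: "('a, 'c) monoid_scheme \<Rightarrow> ('b, 'd) monoid_scheme \<Rightarrow> ('a + 'b) \<Rightarrow> ('a + 'b) list \<Rightarrow> ('a + 'b) list" where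
  "fp_cons G H (Inl a) w =
     (if a = \<one>\<^bsub>G\<^esub> then w else
      (case w of
         Inl b # w' \<Rightarrow> (if a \<otimes>\<^bsub>G\<^esub> b = \<one>\<^bsub>G\<^esub> then w' else Inl (a \<otimes>\<^bsub>G\<^esub> b) # w')
       | _ \<Rightarrow> Inl a # w))"
| "fp_cons G H (Inr a) w =
     (if a = \<one>\<^bsub>H\<^esub> then w else
      (case w of
         Inr b # w' \<Rightarrow> (if a \<otimes>\<^bsub>H\<^esub> b = \<one>\<^bsub>H\<^esub> then w' else Inr (a \<otimes>\<^bsub>H\<^esub> b) # w')
       | _ \<Rightarrow> Inr a # w))"

definition free_product :: "('a, 'c) monoid_scheme \<Rightarrow> ('b, 'd) monoid_scheme \<Rightarrow> ('a + 'b) list monoid" where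
  "free_product G H =
     \<lparr> carrier = {w. fp_reduced G H w},
       mult = (\<lambda>u v. foldr (fp_cons G H) u v),
       one = [] \<rparr>"

definition fp_inl :: "('a, 'c) monoid_scheme \<Rightarrow> 'a \<Rightarrow> ('a + 'b) list" where
  "fp_inl G a = (if a = \<one>\<^bsub>G\<^esub> then [] else [Inl a])"

definition fp_inr :: "('b, 'd) monoid_scheme \<Rightarrow> 'b \<Rightarrow> ('a + 'b) list" where
  "fp_inr H b = (if b = \<one>\<^bsub>H\<^esub> then [] else [Inr b])"

definition cayley_edge :: "('a, 'c) monoid_scheme \<Rightarrow> 'a set \<Rightarrow> 'a \<Rightarrow> 'a \<Rightarrow> bool" where
  "cayley_edge G S g h \<longleftrightarrow>
     g \<in> carrier G \<and> h \<noteq> g \<and>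
     ((\<exists>s \<in> S \<union> (\<lambda>s. inv\<^bsub>G\<^esub> s) ` S. h = g \<otimes>\<^bsub>G\<^esub> s) \<or> (\<exists>s \<in> S \<union> (\<lambda>s. inv\<^bsub>G\<^esub> s) ` S. g = h \<otimes>\<^bsub>G\<^esub> s))"

definition cayley_dist :: "('a, 'c) monoid_scheme \<Rightarrow> 'a set \<Rightarrow> 'a \<Rightarrow> 'a \<Rightarrow> real" where
  "cayley_dist G S g h = real (LEAST n. \<exists>p. length p = Suc n \<and> p ! 0 = g \<and> p ! n = h \<and>
       (\<forall>i<n. cayley_edge G S (p ! i) (p ! Suc i)))"

definition cond_strict_neg_def :: "'a set \<Rightarrow> ('a \<Rightarrow> 'a \<Rightarrow> real) \<Rightarrow> bool" where
  "cond_strict_neg_def X K \<longleftrightarrow>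
     (\<forall>lam :: 'a \<Rightarrow> complex.
        finite {x. lam x \<noteq> 0} \<and> {x. lam x \<noteq> 0} \<subseteq> X \<and> (\<exists>x. lam x \<noteq> 0) \<and>
        (\<Sum>x\<in>{x. lam x \<noteq> 0}. lam x) = 0 \<longrightarrow>
        (\<Sum>x\<in>{x. lam x \<noteq> 0}. \<Sum>y\<in>{x. lam x \<noteq> 0}. lam x * cnj (lam y) * complex_of_real (K x y)) < 0)"

end

theory Submission
  imports Defs
begin


inductive walk :: "('a,'c) monoid_scheme \<Rightarrow> 'a set \<Rightarrow> 'a \<Rightarrow> 'a \<Rightarrow> nat \<Rightarrow> bool" for M S where
  w0: "walk M S g g 0"
| wS: "cayley_edge M S g h \<Longrightarrow> walk M S h k n \<Longrightarrow> walk M S g k (Suc n)"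

lemma dpath_imp_walk:
  "length p = Suc n \<Longrightarrow> p!0 = g \<Longrightarrow> p!n = h \<Longrightarrow> (\<forall>i<n. cayley_edge M S (p!i) (p!Suc i)) \<Longrightarrow> walk M S g h n"
proof (induction n arbitrary: g p)
  case 0
  then show ?case by (auto intro: walk.w0)
next
  case (Suc n)
  then obtain q where p: "p = g # q" by (cases p) auto
  have "walk M S (q!0) h n"
    using Suc.prems p by (intro Suc.IH[of q]) auto
  moreover have "cayley_edge M S g (q!0)" using Suc.prems(4)[rule_format, of 0] p by auto
  ultimately show ?case by (rule walk.wS[rotated])
qed

lemma walk_imp_dpath:
  "walk M S g h n \<Longrightarrow> \<exists>p. length p = Suc n \<and> p!0 = g \<and> p!n = h \<and> (\<forall>i<n. cayley_edge M S (p!i) (p!Suc i))"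
proof (induction rule: walk.induct)
  case (w0 g)
  then show ?case by (intro exI[of _ "[g]"]) auto
next
  case (wS g h k n)
  then obtain p where p: "length p = Suc n" "p!0 = h" "p!n = k" "\<forall>i<n. cayley_edge M S (p!i) (p!Suc i)" by blast
  show ?case
  proof (intro exI[of _ "g # p"] conjI allI impI)
    fix i assume "i < Suc n"
    then show "cayley_edge M S ((g # p) ! i) ((g # p) ! Suc i)"
      using p wS.hyps(1) by (cases i) auto
  qed (use p in auto)
qed

lemma cayley_dist_walk: "cayley_dist M S g h = real (LEAST n. walk M S g h n)"
proof -
  have "(\<lambda>n. \<exists>p. length p = Suc n \<and> p ! 0 = g \<and> p ! n = h \<and> (\<forall>i<n. cayley_edge M S (p ! i) (p ! Suc i))) = walk M S g h"
  proof (rule ext, rule iffI)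
    fix n assume "\<exists>p. length p = Suc n \<and> p ! 0 = g \<and> p ! n = h \<and> (\<forall>i<n. cayley_edge M S (p ! i) (p ! Suc i))"
    then obtain p where p: "length p = Suc n" "p ! 0 = g" "p ! n = h" "\<forall>i<n. cayley_edge M S (p ! i) (p ! Suc i)"
      by blast
    show "walk M S g h n" using dpath_imp_walk[OF p] .
  next
    fix n assume "walk M S g h n"
    then show "\<exists>p. length p = Suc n \<and> p ! 0 = g \<and> p ! n = h \<and> (\<forall>i<n. cayley_edge M S (p ! i) (p ! Suc i))"
      by (rule walk_imp_dpath)
  qed
  from arg_cong[OF this, of "\<lambda>P. real (Least P)"] show ?thesis unfolding cayley_dist_def .
qed

lemma dist_le: "walk M S g h n \<Longrightarrow> cayley_dist M S g h \<le> n"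
proof -
  assume w: "walk M S g h n"
  have "(LEAST n. walk M S g h n) \<le> n" by (rule Least_le) (rule w)
  then show ?thesis unfolding cayley_dist_walk by simp
qed

lemma dist_walk: "walk M S g h n \<Longrightarrow> \<exists>m. walk M S g h m \<and> cayley_dist M S g h = real m"
proof -
  assume w: "walk M S g h n"
  have "walk M S g h (LEAST n. walk M S g h n)" by (rule LeastI) (rule w)
  then show ?thesis unfolding cayley_dist_walk by blast
qed

lemma walk_trans: "walk M S g h m \<Longrightarrow> walk M S h k n \<Longrightarrow> walk M S g k (m + n)"
proof (induction rule: walk.induct)
  case (w0 g) then show ?case by simp
next
  case (wS g h' k' m)
  have "walk M S h' k (m + n)" using wS.IH wS.prems .
  then show ?case using walk.wS[OF wS.hyps(1)] by simp
qed

lemma walk_carrier: "walk M S g h n \<Longrightarrow> h \<in> carrier M \<Longrightarrow> g \<in> carrier M"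
  by (induction rule: walk.induct) (auto simp: cayley_edge_def)

lemma edge_sym: "cayley_edge M S g h \<Longrightarrow> h \<in> carrier M \<Longrightarrow> cayley_edge M S h g"
  unfolding cayley_edge_def by auto

lemma walk_edge: "cayley_edge M S g h \<Longrightarrow> walk M S g h 1"
proof -
  assume e: "cayley_edge M S g h"
  show ?thesis using walk.wS[OF e walk.w0] by simp
qed

lemma walk_sym: "walk M S g h n \<Longrightarrow> h \<in> carrier M \<Longrightarrow> walk M S h g n"
proof (induction rule: walk.induct)
  case (w0 g)
  show ?case by (simp add: walk.w0)
next
  case (wS g h k n)
  have hc: "h \<in> carrier M" using walk_carrier[OF wS.hyps(2) wS.prems] .
  have gc: "g \<in> carrier M" using wS.hyps(1) by (simp add: cayley_edge_def)
  have "walk M S h g 1" using edge_sym[OF wS.hyps(1) hc] by (rule walk_edge)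
  from walk_trans[OF wS.IH[OF wS.prems] this] show ?case by simp
qed

lemma dist_sym: "g \<in> carrier M \<Longrightarrow> h \<in> carrier M \<Longrightarrow> cayley_dist M S g h = cayley_dist M S h g"
proof -
  assume a: "g \<in> carrier M" "h \<in> carrier M"
  have "walk M S g h = walk M S h g"
    proof (rule ext)
    fix n show "walk M S g h n = walk M S h g n"
      using walk_sym[of M S g h n] walk_sym[of M S h g n] a by blast
  qed
  then show ?thesis unfolding cayley_dist_walk by simp
qed

lemma dist_self: "cayley_dist M S g g = 0"
proof -
  have "cayley_dist M S g g \<le> 0" using dist_le[OF walk.w0] by simp
  moreover have "cayley_dist M S g g \<ge> 0" unfolding cayley_dist_walk by simp
  ultimately show ?thesis by simp
qed

lemma dist_nonneg: "cayley_dist M S g h \<ge> 0"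
  unfolding cayley_dist_walk by simp

lemma walk_map:
  assumes f: "\<And>u v. u \<in> carrier M1 \<Longrightarrow> v \<in> carrier M1 \<Longrightarrow> cayley_edge M1 S1 u v \<Longrightarrow>
                 f u = f v \<or> cayley_edge M2 S2 (f u) (f v)"
  shows "walk M1 S1 u v n \<Longrightarrow> v \<in> carrier M1 \<Longrightarrow> \<exists>m\<le>n. walk M2 S2 (f u) (f v) m"
proof (induction rule: walk.induct)
  case (w0 g)
  have "walk M2 S2 (f g) (f g) 0" by (rule walk.w0)
  then show ?case by blast
next
  case (wS g h k n)
  have hc: "h \<in> carrier M1" using walk_carrier[OF wS.hyps(2) wS.prems] .
  have gc: "g \<in> carrier M1" using wS.hyps(1) by (simp add: cayley_edge_def)
  obtain m where m: "m \<le> n" "walk M2 S2 (f h) (f k) m" using wS.IH[OF wS.prems] by blast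
  from f[OF gc hc wS.hyps(1)] show ?case
  proof
    assume fe: "f g = f h"
    show ?thesis using m fe by (intro exI[of _ m]) simp
  next
    assume e: "cayley_edge M2 S2 (f g) (f h)"
    have "walk M2 S2 (f g) (f k) (Suc m)" by (rule walk.wS[OF e m(2)])
    then show ?thesis using m(1) by (intro exI[of _ "Suc m"]) simp
  qed
qed

lemma dist_map:
  assumes f: "\<And>u v. u \<in> carrier M1 \<Longrightarrow> v \<in> carrier M1 \<Longrightarrow> cayley_edge M1 S1 u v \<Longrightarrow>
                 f u = f v \<or> cayley_edge M2 S2 (f u) (f v)"
    and "walk M1 S1 u v n" and "v \<in> carrier M1"
  shows "cayley_dist M2 S2 (f u) (f v) \<le> cayley_dist M1 S1 u v"
proof -
  obtain k where k: "walk M1 S1 u v k" "cayley_dist M1 S1 u v = real k"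
    using dist_walk[OF assms(2)] by blast
  obtain m where mk: "m \<le> k" and mw: "walk M2 S2 (f u) (f v) m"
    using walk_map[of M1 S1 f M2 S2, OF assms(1) k(1) assms(3)] by blast
  from mw have "cayley_dist M2 S2 (f u) (f v) \<le> real m" by (rule dist_le)
  then show ?thesis using k(2) \<open>m \<le> k\<close> by simp
qed


lemma translate_edge:
  fixes G (structure)
  assumes "group G" "S \<subseteq> carrier G" "a \<in> carrier G" "u \<in> carrier G" "v \<in> carrier G"
    "cayley_edge G S u v"
  shows "cayley_edge G S (a \<otimes>\<^bsub>G\<^esub> u) (a \<otimes>\<^bsub>G\<^esub> v)"
proof -
  interpret group G by fact
  have Sc: "S \<union> (\<lambda>s. inv s) ` S \<subseteq> carrier G" using assms(2) by auto
  have "v \<noteq> u" using assms(6) by (simp add: cayley_edge_def)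
  then have ne: "a \<otimes> v \<noteq> a \<otimes> u" using assms(3-5) by simp
  from assms(6) have "(\<exists>s \<in> S \<union> (\<lambda>s. inv s) ` S. v = u \<otimes> s) \<or> (\<exists>s \<in> S \<union> (\<lambda>s. inv s) ` S. u = v \<otimes> s)"
    by (simp add: cayley_edge_def)
  then have "(\<exists>s \<in> S \<union> (\<lambda>s. inv s) ` S. a \<otimes> v = (a \<otimes> u) \<otimes> s) \<or> (\<exists>s \<in> S \<union> (\<lambda>s. inv s) ` S. a \<otimes> u = (a \<otimes> v) \<otimes> s)"
  proof (elim disjE bexE)
    fix s assume s: "s \<in> S \<union> (\<lambda>s. inv s) ` S" "v = u \<otimes> s"
    have "s \<in> carrier G" using s(1) Sc by blast
    then have "a \<otimes> v = (a \<otimes> u) \<otimes> s" using s(2) assms(3,4) by (simp add: m_assoc)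
    then show ?thesis using s(1) by blast
  next
    fix s assume s: "s \<in> S \<union> (\<lambda>s. inv s) ` S" "u = v \<otimes> s"
    have "s \<in> carrier G" using s(1) Sc by blast
    then have "a \<otimes> u = (a \<otimes> v) \<otimes> s" using s(2) assms(3,5) by (simp add: m_assoc)
    then show ?thesis using s(1) by blast
  qed
  moreover have "a \<otimes> u \<in> carrier G" using assms(3,4) by simp
  ultimately show ?thesis using ne unfolding cayley_edge_def by blast
qed

lemma group_walk_from_one:
  fixes G (structure)
  assumes "group G" "S \<subseteq> carrier G" "g \<in> generate G S"
  shows "\<exists>n. walk G S \<one>\<^bsub>G\<^esub> g n"
  using assms(3)
proof (induction rule: generate.induct)
  case one
  then show ?case by (auto intro: walk.w0)
next
  case (incl h)
  interpret group G by fact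
  have hc: "h \<in> carrier G" using incl assms(2) by auto
  show ?case
  proof (cases "h = \<one>")
    case True then show ?thesis by (auto intro: walk.w0)
  next
    case False
    have "cayley_edge G S \<one> h" using False hc incl unfolding cayley_edge_def
      by (intro conjI disjI1 bexI[of _ h]) auto
    then show ?thesis by (blast intro: walk_edge)
  qed
next
  case (inv h)
  interpret group G by fact
  have hc: "inv h \<in> carrier G" using inv assms(2) by auto
  show ?case
  proof (cases "inv h = \<one>")
    case True then show ?thesis by (auto intro: walk.w0)
  next
    case False
    have "cayley_edge G S \<one> (inv h)" using False hc inv unfolding cayley_edge_def
      by (intro conjI disjI1 bexI[of _ "inv h"]) auto
    then show ?thesis by (blast intro: walk_edge)
  qed
next
  case (eng h1 h2)
  interpret group G by fact
  have c1: "h1 \<in> carrier G" "h2 \<in> carrier G"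
    using eng generate_in_carrier assms(2) by auto
  obtain n1 n2 where w: "walk G S \<one> h1 n1" "walk G S \<one> h2 n2" using eng by blast
  have tr: "\<And>u v. u \<in> carrier G \<Longrightarrow> v \<in> carrier G \<Longrightarrow> cayley_edge G S u v \<Longrightarrow>
      h1 \<otimes> u = h1 \<otimes> v \<or> cayley_edge G S (h1 \<otimes> u) (h1 \<otimes> v)"
    using translate_edge[OF assms(1,2) c1(1)] by blast
  obtain m where "m \<le> n2" "walk G S (h1 \<otimes> \<one>) (h1 \<otimes> h2) m"
    using walk_map[of G S "\<lambda>x. h1 \<otimes> x" G S, OF tr w(2) c1(2)] by blast
  then have "walk G S h1 (h1 \<otimes> h2) m" using c1 by simp
  then show ?case using walk_trans[OF w(1)] by blast
qed

lemma group_connected: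
  assumes "group G" "S \<subseteq> carrier G" "generate G S = carrier G"
    "g \<in> carrier G" "h \<in> carrier G"
  shows "\<exists>n. walk G S g h n"
proof -
  obtain n1 n2 where "walk G S \<one>\<^bsub>G\<^esub> g n1" "walk G S \<one>\<^bsub>G\<^esub> h n2"
    using group_walk_from_one assms by metis
  then show ?thesis using walk_sym walk_trans assms(4) by metis
qed


definition lok :: "('a, 'c) monoid_scheme \<Rightarrow> ('b, 'd) monoid_scheme \<Rightarrow> ('a + 'b) \<Rightarrow> bool" where
  "lok G H x \<longleftrightarrow> (case x of Inl a \<Rightarrow> a \<in> carrier G \<and> a \<noteq> \<one>\<^bsub>G\<^esub> | Inr b \<Rightarrow> b \<in> carrier H \<and> b \<noteq> \<one>\<^bsub>H\<^esub>)"

lemma lok_simps[simp]: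
  "lok G H (Inl a) \<longleftrightarrow> a \<in> carrier G \<and> a \<noteq> \<one>\<^bsub>G\<^esub>"
  "lok G H (Inr b) \<longleftrightarrow> b \<in> carrier H \<and> b \<noteq> \<one>\<^bsub>H\<^esub>"
  by (simp_all add: lok_def)

lemma fp_reduced_alt:
  "fp_reduced G H w \<longleftrightarrow> (\<forall>x\<in>set w. lok G H x) \<and> successively (\<lambda>x y. isl x \<noteq> isl y) w"
  unfolding fp_reduced_def successively_conv_nth lok_def by simp

lemma fp_reduced_append:
  "fp_reduced G H (u @ v) \<longleftrightarrow> fp_reduced G H u \<and> fp_reduced G H v \<and>
     (u = [] \<or> v = [] \<or> isl (last u) \<noteq> isl (hd v))"
  unfolding fp_reduced_alt successively_append_iff by auto

lemma fp_reduced_Cons: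
  "fp_reduced G H (x # v) \<longleftrightarrow> lok G H x \<and> fp_reduced G H v \<and> (v = [] \<or> isl x \<noteq> isl (hd v))"
  unfolding fp_reduced_alt successively_Cons by auto

lemma fp_reduced_Nil[simp]: "fp_reduced G H []"
  unfolding fp_reduced_alt by simp

lemma fp_carrier[simp]: "carrier (free_product G H) = {w. fp_reduced G H w}"
  and fp_mult[simp]: "u \<otimes>\<^bsub>free_product G H\<^esub> v = foldr (fp_cons G H) u v"
  and fp_one[simp]: "\<one>\<^bsub>free_product G H\<^esub> = []"
  by (simp_all add: free_product_def)

lemma foldr_reduced: "fp_reduced G H (u @ v) \<Longrightarrow> foldr (fp_cons G H) u v = u @ v"
proof (induction u)
  case Nil
  then show ?case by simp
next
  case (Cons y u)
  have red: "fp_reduced G H (u @ v)" and ly: "lok G H y"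
    and alt: "u @ v = [] \<or> isl y \<noteq> isl (hd (u @ v))"
    using Cons.prems by (simp_all add: fp_reduced_Cons)
  have "foldr (fp_cons G H) (y # u) v = fp_cons G H y (u @ v)" using Cons.IH[OF red] by simp
  also have "\<dots> = y # u @ v"
  proof (cases y)
    case (Inl a)
    then show ?thesis using ly alt
      by (cases "u @ v") (auto split: sum.splits)
  next
    case (Inr b)
    then show ?thesis using ly alt
      by (cases "u @ v") (auto split: sum.splits)
  qed
  finally show ?case by simp
qed

definition notl :: "('a + 'b) list \<Rightarrow> bool" where
  "notl w \<longleftrightarrow> w = [] \<or> \<not> isl (last w)"
definition notr :: "('a + 'b) list \<Rightarrow> bool" where
  "notr w \<longleftrightarrow> w = [] \<or> isl (last w)"

lemma fp_inl_1[simp]: "fp_inl G \<one>\<^bsub>G\<^esub> = []" by (simp add: fp_inl_def)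
lemma fp_inr_1[simp]: "fp_inr H \<one>\<^bsub>H\<^esub> = []" by (simp add: fp_inr_def)

lemma fp_inl_eq_iff[simp]: "fp_inl G a = fp_inl G b \<longleftrightarrow> a = b"
  by (simp add: fp_inl_def)
lemma fp_inr_eq_iff[simp]: "fp_inr H a = fp_inr H b \<longleftrightarrow> a = b"
  by (simp add: fp_inr_def)

lemma red_inl: "fp_reduced G H x \<Longrightarrow> notl x \<Longrightarrow> a \<in> carrier G \<Longrightarrow> fp_reduced G H (x @ fp_inl G a)"
  by (auto simp: fp_inl_def fp_reduced_append fp_reduced_Cons notl_def)
lemma red_inr: "fp_reduced G H x \<Longrightarrow> notr x \<Longrightarrow> a \<in> carrier H \<Longrightarrow> fp_reduced G H (x @ fp_inr H a)"
  by (auto simp: fp_inr_def fp_reduced_append fp_reduced_Cons notr_def)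

lemma mult_inl:
  assumes "group G" "fp_reduced G H x" "notl x" "a \<in> carrier G" "s \<in> carrier G"
  shows "foldr (fp_cons G H) (x @ fp_inl G a) (fp_inl G s) = x @ fp_inl G (a \<otimes>\<^bsub>G\<^esub> s)"
proof -
  interpret group G by fact
  have "foldr (fp_cons G H) (fp_inl G a) (fp_inl G s) = fp_inl G (a \<otimes>\<^bsub>G\<^esub> s)"
    using assms(4,5) by (auto simp: fp_inl_def)
  then show ?thesis
    using foldr_reduced[OF red_inl[OF assms(2,3)], of "a \<otimes>\<^bsub>G\<^esub> s"] assms by simp
qed

lemma mult_inr:
  assumes "group H" "fp_reduced G H x" "notr x" "a \<in> carrier H" "s \<in> carrier H"
  shows "foldr (fp_cons G H) (x @ fp_inr H a) (fp_inr H s) = x @ fp_inr H (a \<otimes>\<^bsub>H\<^esub> s)"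
proof -
  interpret group H by fact
  have "foldr (fp_cons G H) (fp_inr H a) (fp_inr H s) = fp_inr H (a \<otimes>\<^bsub>H\<^esub> s)"
    using assms(4,5) by (auto simp: fp_inr_def)
  then show ?thesis
    using foldr_reduced[OF red_inr[OF assms(2,3)], of "a \<otimes>\<^bsub>H\<^esub> s"] assms by simp
qed

lemma decomp_inl:
  assumes "group G" "fp_reduced G H u"
  shows "\<exists>x a. u = x @ fp_inl G a \<and> fp_reduced G H x \<and> notl x \<and> a \<in> carrier G"
proof (cases "u \<noteq> [] \<and> isl (last u)")
  case True
  then obtain a where la: "last u = Inl a" by (cases "last u") auto
  have u: "u = butlast u @ [Inl a]" using True la by (metis append_butlast_last_id)
  have "fp_reduced G H (butlast u @ [Inl a])" using assms u by simp
  then have r: "fp_reduced G H (butlast u)" "notl (butlast u)" "a \<in> carrier G" "a \<noteq> \<one>\<^bsub>G\<^esub>"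
    unfolding fp_reduced_append notl_def by (auto simp: fp_reduced_Cons)
  show ?thesis using u r by (intro exI[of _ "butlast u"] exI[of _ a]) (auto simp: fp_inl_def)
next
  case False
  have "\<one>\<^bsub>G\<^esub> \<in> carrier G" using assms(1) by (simp add: group.is_monoid monoid.one_closed)
  then show ?thesis using False assms
    by (intro exI[of _ u] exI[of _ "\<one>\<^bsub>G\<^esub>"]) (auto simp: notl_def)
qed

lemma decomp_inr:
  assumes "group H" "fp_reduced G H u"
  shows "\<exists>x a. u = x @ fp_inr H a \<and> fp_reduced G H x \<and> notr x \<and> a \<in> carrier H"
proof (cases "u \<noteq> [] \<and> \<not> isl (last u)")
  case True
  then obtain a where la: "last u = Inr a" by (cases "last u") auto
  have u: "u = butlast u @ [Inr a]" using True la by (metis append_butlast_last_id)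
  have "fp_reduced G H (butlast u @ [Inr a])" using assms u by simp
  then have r: "fp_reduced G H (butlast u)" "notr (butlast u)" "a \<in> carrier H" "a \<noteq> \<one>\<^bsub>H\<^esub>"
    unfolding fp_reduced_append notr_def by (auto simp: fp_reduced_Cons)
  show ?thesis using u r by (intro exI[of _ "butlast u"] exI[of _ a]) (auto simp: fp_inr_def)
next
  case False
  have "\<one>\<^bsub>H\<^esub> \<in> carrier H" using assms(1) by (simp add: group.is_monoid monoid.one_closed)
  then show ?thesis using False assms
    by (intro exI[of _ u] exI[of _ "\<one>\<^bsub>H\<^esub>"]) (auto simp: notr_def)
qed


lemma inv_inl:
  fixes G (structure)
  assumes "group G" "s \<in> carrier G"
  shows "inv\<^bsub>free_product G H\<^esub> (fp_inl G s) = fp_inl G (inv\<^bsub>G\<^esub> s)"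
  unfolding m_inv_def[of "free_product G H"]
proof (rule the_equality)
  interpret group G by fact
  have m: "\<And>a t. a \<in> carrier G \<Longrightarrow> t \<in> carrier G \<Longrightarrow>
      foldr (fp_cons G H) (fp_inl G a) (fp_inl G t) = fp_inl G (a \<otimes> t)"
    using mult_inl[OF assms(1), of H "[]"] by (simp add: notl_def)
  show "fp_inl G (inv s) \<in> carrier (free_product G H) \<and>
    fp_inl G s \<otimes>\<^bsub>free_product G H\<^esub> fp_inl G (inv s) = \<one>\<^bsub>free_product G H\<^esub> \<and>
    fp_inl G (inv s) \<otimes>\<^bsub>free_product G H\<^esub> fp_inl G s = \<one>\<^bsub>free_product G H\<^esub>"
    using red_inl[of G H "[]" "inv s"] assms(2) m[of s "inv s"] m[of "inv s" s]
    by (simp add: notl_def)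
  fix y assume y: "y \<in> carrier (free_product G H) \<and>
    fp_inl G s \<otimes>\<^bsub>free_product G H\<^esub> y = \<one>\<^bsub>free_product G H\<^esub> \<and>
    y \<otimes>\<^bsub>free_product G H\<^esub> fp_inl G s = \<one>\<^bsub>free_product G H\<^esub>"
  then obtain x a where xa: "y = x @ fp_inl G a" "fp_reduced G H x" "notl x" "a \<in> carrier G"
    using decomp_inl[OF assms(1)] by force
  have "x @ fp_inl G (a \<otimes> s) = []" using y xa mult_inl[OF assms(1) xa(2,3,4) assms(2)] by simp
  then have "x = []" "a \<otimes> s = \<one>" by (auto simp: fp_inl_def split: if_splits)
  then show "y = fp_inl G (inv s)" using xa assms(2) using inv_equality by auto
qed

lemma inv_inr:
  fixes H (structure)
  assumes "group H" "s \<in> carrier H"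
  shows "inv\<^bsub>free_product G H\<^esub> (fp_inr H s) = fp_inr H (inv\<^bsub>H\<^esub> s)"
  unfolding m_inv_def[of "free_product G H"]
proof (rule the_equality)
  interpret group H by fact
  have m: "\<And>a t. a \<in> carrier H \<Longrightarrow> t \<in> carrier H \<Longrightarrow>
      foldr (fp_cons G H) (fp_inr H a) (fp_inr H t) = fp_inr H (a \<otimes> t)"
    using mult_inr[OF assms(1), of G "[]"] by (simp add: notr_def)
  show "fp_inr H (inv s) \<in> carrier (free_product G H) \<and>
    fp_inr H s \<otimes>\<^bsub>free_product G H\<^esub> fp_inr H (inv s) = \<one>\<^bsub>free_product G H\<^esub> \<and>
    fp_inr H (inv s) \<otimes>\<^bsub>free_product G H\<^esub> fp_inr H s = \<one>\<^bsub>free_product G H\<^esub>"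
    using red_inr[of G H "[]" "inv s"] assms(2) m[of s "inv s"] m[of "inv s" s]
    by (simp add: notr_def)
  fix y assume y: "y \<in> carrier (free_product G H) \<and>
    fp_inr H s \<otimes>\<^bsub>free_product G H\<^esub> y = \<one>\<^bsub>free_product G H\<^esub> \<and>
    y \<otimes>\<^bsub>free_product G H\<^esub> fp_inr H s = \<one>\<^bsub>free_product G H\<^esub>"
  then obtain x a where xa: "y = x @ fp_inr H a" "fp_reduced G H x" "notr x" "a \<in> carrier H"
    using decomp_inr[OF assms(1)] by force
  have "x @ fp_inr H (a \<otimes> s) = []" using y xa mult_inr[OF assms(1) xa(2,3,4) assms(2)] by simp
  then have "x = []" "a \<otimes> s = \<one>" by (auto simp: fp_inr_def split: if_splits)
  then show "y = fp_inr H (inv s)" using xa assms(2) using inv_equality by auto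
qed

lemma gens_inv:
  assumes "group G" "group H" "S1 \<subseteq> carrier G" "S2 \<subseteq> carrier H"
  shows "(fp_inl G ` S1 \<union> fp_inr H ` S2) \<union> (\<lambda>s. inv\<^bsub>free_product G H\<^esub> s) ` (fp_inl G ` S1 \<union> fp_inr H ` S2)
    = fp_inl G ` (S1 \<union> (\<lambda>s. inv\<^bsub>G\<^esub> s) ` S1) \<union> fp_inr H ` (S2 \<union> (\<lambda>s. inv\<^bsub>H\<^esub> s) ` S2)"
  using assms inv_inl[OF assms(1), of _ H] inv_inr[OF assms(2), of _ G]
  by (auto simp: image_Un image_image subset_iff)


definition gens :: "('a, 'c) monoid_scheme \<Rightarrow> ('b, 'd) monoid_scheme \<Rightarrow> 'a set \<Rightarrow> 'b set \<Rightarrow> ('a + 'b) list set" where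
  "gens G H S1 S2 = fp_inl G ` S1 \<union> fp_inr H ` S2"

lemma fp_edge_D:
  assumes "group G" "group H" "S1 \<subseteq> carrier G" "S2 \<subseteq> carrier H"
    "fp_reduced G H u" "fp_reduced G H v" "cayley_edge (free_product G H) (gens G H S1 S2) u v"
  shows "(\<exists>x a b. fp_reduced G H x \<and> notl x \<and> u = x @ fp_inl G a \<and> v = x @ fp_inl G b \<and>
             cayley_edge G S1 a b \<and> b \<in> carrier G) \<or>
         (\<exists>x a b. fp_reduced G H x \<and> notr x \<and> u = x @ fp_inr H a \<and> v = x @ fp_inr H b \<and>
             cayley_edge H S2 a b \<and> b \<in> carrier H)"
proof -
  let ?FP = "free_product G H"
  let ?T1 = "S1 \<union> (\<lambda>s. inv\<^bsub>G\<^esub> s) ` S1"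
  let ?T2 = "S2 \<union> (\<lambda>s. inv\<^bsub>H\<^esub> s) ` S2"
  have T1c: "?T1 \<subseteq> carrier G" using assms(1,3) by (auto intro: group.inv_closed)
  have T2c: "?T2 \<subseteq> carrier H" using assms(2,4) by (auto intro: group.inv_closed)
  have ne: "v \<noteq> u" and
    e: "(\<exists>t \<in> fp_inl G ` ?T1 \<union> fp_inr H ` ?T2. v = foldr (fp_cons G H) u t) \<or>
        (\<exists>t \<in> fp_inl G ` ?T1 \<union> fp_inr H ` ?T2. u = foldr (fp_cons G H) v t)"
    using assms(7) gens_inv[OF assms(1-4)] unfolding cayley_edge_def gens_def by auto
  from e show ?thesis
  proof (elim disjE bexE)
    fix t assume t: "t \<in> fp_inl G ` ?T1 \<union> fp_inr H ` ?T2" and v: "v = foldr (fp_cons G H) u t"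
    from t show ?thesis
    proof
      assume "t \<in> fp_inl G ` ?T1"
      then obtain s where s: "s \<in> ?T1" "t = fp_inl G s" by blast
      obtain x a where xa: "u = x @ fp_inl G a" "fp_reduced G H x" "notl x" "a \<in> carrier G"
        using decomp_inl[OF assms(1,5)] by blast
      have sc: "s \<in> carrier G" using s T1c by auto
      have v': "v = x @ fp_inl G (a \<otimes>\<^bsub>G\<^esub> s)" using v s xa mult_inl[OF assms(1) xa(2-4) sc] by simp
      have "cayley_edge G S1 a (a \<otimes>\<^bsub>G\<^esub> s)"
        using ne xa v' s(1) unfolding cayley_edge_def by auto
      moreover have "a \<otimes>\<^bsub>G\<^esub> s \<in> carrier G" using xa(4) sc assms(1) by (meson group.is_monoid monoid.m_closed)
      ultimately show ?thesis using xa v' by (intro disjI1 exI[of _ x] exI[of _ a] exI[of _ "a \<otimes>\<^bsub>G\<^esub> s"]) simp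
    next
      assume "t \<in> fp_inr H ` ?T2"
      then obtain s where s: "s \<in> ?T2" "t = fp_inr H s" by blast
      obtain x a where xa: "u = x @ fp_inr H a" "fp_reduced G H x" "notr x" "a \<in> carrier H"
        using decomp_inr[OF assms(2,5)] by blast
      have sc: "s \<in> carrier H" using s T2c by auto
      have v': "v = x @ fp_inr H (a \<otimes>\<^bsub>H\<^esub> s)" using v s xa mult_inr[OF assms(2) xa(2-4) sc] by simp
      have "cayley_edge H S2 a (a \<otimes>\<^bsub>H\<^esub> s)"
        using ne xa v' s(1) unfolding cayley_edge_def by auto
      moreover have "a \<otimes>\<^bsub>H\<^esub> s \<in> carrier H" using xa(4) sc assms(2) by (meson group.is_monoid monoid.m_closed)
      ultimately show ?thesis using xa v' by (intro disjI2 exI[of _ x] exI[of _ a] exI[of _ "a \<otimes>\<^bsub>H\<^esub> s"]) simp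
    qed
  next
    fix t assume t: "t \<in> fp_inl G ` ?T1 \<union> fp_inr H ` ?T2" and u: "u = foldr (fp_cons G H) v t"
    from t show ?thesis
    proof
      assume "t \<in> fp_inl G ` ?T1"
      then obtain s where s: "s \<in> ?T1" "t = fp_inl G s" by blast
      obtain x b where xb: "v = x @ fp_inl G b" "fp_reduced G H x" "notl x" "b \<in> carrier G"
        using decomp_inl[OF assms(1,6)] by blast
      have sc: "s \<in> carrier G" using s T1c by auto
      have u': "u = x @ fp_inl G (b \<otimes>\<^bsub>G\<^esub> s)" using u s xb mult_inl[OF assms(1) xb(2-4) sc] by simp
      have "cayley_edge G S1 (b \<otimes>\<^bsub>G\<^esub> s) b"
        using ne xb u' s(1) sc assms(1) unfolding cayley_edge_def by (auto intro: group.is_monoid monoid.m_closed)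
      then show ?thesis using xb u' by (intro disjI1 exI[of _ x] exI[of _ "b \<otimes>\<^bsub>G\<^esub> s"] exI[of _ b]) auto
    next
      assume "t \<in> fp_inr H ` ?T2"
      then obtain s where s: "s \<in> ?T2" "t = fp_inr H s" by blast
      obtain x b where xb: "v = x @ fp_inr H b" "fp_reduced G H x" "notr x" "b \<in> carrier H"
        using decomp_inr[OF assms(2,6)] by blast
      have sc: "s \<in> carrier H" using s T2c by auto
      have u': "u = x @ fp_inr H (b \<otimes>\<^bsub>H\<^esub> s)" using u s xb mult_inr[OF assms(2) xb(2-4) sc] by simp
      have "cayley_edge H S2 (b \<otimes>\<^bsub>H\<^esub> s) b"
        using ne xb u' s(1) sc assms(2) unfolding cayley_edge_def by (auto intro: group.is_monoid monoid.m_closed)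
      then show ?thesis using xb u' by (intro disjI2 exI[of _ x] exI[of _ "b \<otimes>\<^bsub>H\<^esub> s"] exI[of _ b]) auto
    qed
  qed
qed

lemma fp_edge_I_l:
  assumes "group G" "group H" "S1 \<subseteq> carrier G" "S2 \<subseteq> carrier H"
    "fp_reduced G H x" "notl x" "cayley_edge G S1 a b" "b \<in> carrier G"
  shows "cayley_edge (free_product G H) (gens G H S1 S2) (x @ fp_inl G a) (x @ fp_inl G b)"
proof -
  let ?T1 = "S1 \<union> (\<lambda>s. inv\<^bsub>G\<^esub> s) ` S1"
  have T1c: "?T1 \<subseteq> carrier G" using assms(1,3) by (auto intro: group.inv_closed)
  have ac: "a \<in> carrier G" "b \<noteq> a" using assms(7) by (auto simp: cayley_edge_def)
  from assms(7) have "(\<exists>s\<in>?T1. b = a \<otimes>\<^bsub>G\<^esub> s) \<or> (\<exists>s\<in>?T1. a = b \<otimes>\<^bsub>G\<^esub> s)"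
    by (simp add: cayley_edge_def)
  then have "(\<exists>s\<in>?T1. x @ fp_inl G b = foldr (fp_cons G H) (x @ fp_inl G a) (fp_inl G s)) \<or>
             (\<exists>s\<in>?T1. x @ fp_inl G a = foldr (fp_cons G H) (x @ fp_inl G b) (fp_inl G s))"
    using mult_inl[OF assms(1,5,6)] ac assms(8) T1c by (metis subsetD)
  then show ?thesis
    using gens_inv[OF assms(1-4)] red_inl[OF assms(5,6) ac(1)] ac
    unfolding cayley_edge_def gens_def by auto
qed

lemma fp_edge_I_r:
  assumes "group G" "group H" "S1 \<subseteq> carrier G" "S2 \<subseteq> carrier H"
    "fp_reduced G H x" "notr x" "cayley_edge H S2 a b" "b \<in> carrier H"
  shows "cayley_edge (free_product G H) (gens G H S1 S2) (x @ fp_inr H a) (x @ fp_inr H b)"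
proof -
  let ?T2 = "S2 \<union> (\<lambda>s. inv\<^bsub>H\<^esub> s) ` S2"
  have T2c: "?T2 \<subseteq> carrier H" using assms(2,4) by (auto intro: group.inv_closed)
  have ac: "a \<in> carrier H" "b \<noteq> a" using assms(7) by (auto simp: cayley_edge_def)
  from assms(7) have "(\<exists>s\<in>?T2. b = a \<otimes>\<^bsub>H\<^esub> s) \<or> (\<exists>s\<in>?T2. a = b \<otimes>\<^bsub>H\<^esub> s)"
    by (simp add: cayley_edge_def)
  then have "(\<exists>s\<in>?T2. x @ fp_inr H b = foldr (fp_cons G H) (x @ fp_inr H a) (fp_inr H s)) \<or>
             (\<exists>s\<in>?T2. x @ fp_inr H a = foldr (fp_cons G H) (x @ fp_inr H b) (fp_inr H s))"
    using mult_inr[OF assms(2,5,6)] ac assms(8) T2c by (metis subsetD)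
  then show ?thesis
    using gens_inv[OF assms(1-4)] red_inr[OF assms(5,6) ac(1)] ac
    unfolding cayley_edge_def gens_def by auto
qed


lemma dist_tri:
  assumes "walk M S g h n1" "walk M S h k n2"
  shows "cayley_dist M S g k \<le> cayley_dist M S g h + cayley_dist M S h k"
proof -
  obtain m1 m2 where "walk M S g h m1" "cayley_dist M S g h = real m1"
    "walk M S h k m2" "cayley_dist M S h k = real m2"
    using dist_walk assms by metis
  then show ?thesis using dist_le[OF walk_trans] by fastforce
qed

lemma butlast_eq: "y @ [z] = x @ w # r \<Longrightarrow> r \<noteq> [] \<Longrightarrow> y = x @ w # butlast r"
proof -
  assume a: "y @ [z] = x @ w # r" "r \<noteq> []"
  have "butlast (y @ [z]) = butlast (x @ w # r)" using a(1) by simp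
  then show ?thesis using a(2) by (simp add: butlast_append)
qed

locale fpc =
  fixes G :: "('a, 'c) monoid_scheme" and H :: "('b, 'd) monoid_scheme"
    and S1 :: "'a set" and S2 :: "'b set"
  assumes gG: "group G" and gH: "group H" and S1c: "S1 \<subseteq> carrier G" and S2c: "S2 \<subseteq> carrier H"
    and genG: "generate G S1 = carrier G" and genH: "generate H S2 = carrier H"
begin

abbreviation "FP \<equiv> free_product G H"
abbreviation "TT \<equiv> gens G H S1 S2"

lemmas fpI_L = fp_edge_I_l[OF gG gH S1c S2c]
lemmas fpI_R = fp_edge_I_r[OF gG gH S1c S2c]
lemmas fpD_L = fp_edge_D[OF gG gH S1c S2c]

lemma fpD_R:
  assumes "fp_reduced G H u" "fp_reduced G H v" "cayley_edge FP TT u v"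
  shows "(\<exists>x a b. fp_reduced G H x \<and> notr x \<and> u = x @ fp_inr H a \<and> v = x @ fp_inr H b \<and>
             cayley_edge H S2 a b \<and> b \<in> carrier H) \<or>
         (\<exists>x a b. fp_reduced G H x \<and> notl x \<and> u = x @ fp_inl G a \<and> v = x @ fp_inl G b \<and>
             cayley_edge G S1 a b \<and> b \<in> carrier G)"
  using fpD_L[OF assms] by blast

lemma oneG: "\<one>\<^bsub>G\<^esub> \<in> carrier G" using gG by (simp add: group.is_monoid monoid.one_closed)
lemma oneH: "\<one>\<^bsub>H\<^esub> \<in> carrier H" using gH by (simp add: group.is_monoid monoid.one_closed)

lemma edge_map_L:
  assumes "fp_reduced G H x" "notl x"
  shows "\<And>u v. u \<in> carrier G \<Longrightarrow> v \<in> carrier G \<Longrightarrow> cayley_edge G S1 u v \<Longrightarrow>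
    x @ fp_inl G u = x @ fp_inl G v \<or> cayley_edge FP TT (x @ fp_inl G u) (x @ fp_inl G v)"
  using fpI_L[OF assms(1,2)] by blast

lemma embed_walk_L:
  assumes "fp_reduced G H x" "notl x" "walk G S1 a b n" "b \<in> carrier G"
  shows "\<exists>m\<le>n. walk FP TT (x @ fp_inl G a) (x @ fp_inl G b) m"
  using walk_map[of G S1 "\<lambda>c. x @ fp_inl G c" FP TT, OF edge_map_L[OF assms(1,2)] assms(3,4)] .

lemma embed_conn_L:
  assumes "fp_reduced G H x" "notl x" "a \<in> carrier G" "b \<in> carrier G"
  shows "\<exists>m. walk FP TT (x @ fp_inl G a) (x @ fp_inl G b) m"
proof -
  obtain n where n: "walk G S1 a b n" using group_connected[OF gG S1c genG assms(3,4)] by blast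
  show ?thesis using embed_walk_L[OF assms(1,2) n assms(4)] by blast
qed

lemma embed_dist_L:
  assumes "fp_reduced G H x" "notl x" "a \<in> carrier G" "b \<in> carrier G"
  shows "cayley_dist FP TT (x @ fp_inl G a) (x @ fp_inl G b) \<le> cayley_dist G S1 a b"
proof -
  obtain n where n: "walk G S1 a b n" using group_connected[OF gG S1c genG assms(3,4)] by blast
  show ?thesis
    by (rule dist_map[of G S1 "\<lambda>c. x @ fp_inl G c" FP TT, OF edge_map_L[OF assms(1,2)] n assms(4)])
qed

lemma edge_map_R:
  assumes "fp_reduced G H x" "notr x"
  shows "\<And>u v. u \<in> carrier H \<Longrightarrow> v \<in> carrier H \<Longrightarrow> cayley_edge H S2 u v \<Longrightarrow>
    x @ fp_inr H u = x @ fp_inr H v \<or> cayley_edge FP TT (x @ fp_inr H u) (x @ fp_inr H v)"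
  using fpI_R[OF assms(1,2)] by blast

lemma embed_walk_R:
  assumes "fp_reduced G H x" "notr x" "walk H S2 a b n" "b \<in> carrier H"
  shows "\<exists>m\<le>n. walk FP TT (x @ fp_inr H a) (x @ fp_inr H b) m"
  using walk_map[of H S2 "\<lambda>c. x @ fp_inr H c" FP TT, OF edge_map_R[OF assms(1,2)] assms(3,4)] .

lemma embed_conn_R:
  assumes "fp_reduced G H x" "notr x" "a \<in> carrier H" "b \<in> carrier H"
  shows "\<exists>m. walk FP TT (x @ fp_inr H a) (x @ fp_inr H b) m"
proof -
  obtain n where n: "walk H S2 a b n" using group_connected[OF gH S2c genH assms(3,4)] by blast
  show ?thesis using embed_walk_R[OF assms(1,2) n assms(4)] by blast
qed

lemma embed_dist_R:
  assumes "fp_reduced G H x" "notr x" "a \<in> carrier H" "b \<in> carrier H"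
  shows "cayley_dist FP TT (x @ fp_inr H a) (x @ fp_inr H b) \<le> cayley_dist H S2 a b"
proof -
  obtain n where n: "walk H S2 a b n" using group_connected[OF gH S2c genH assms(3,4)] by blast
  show ?thesis
    by (rule dist_map[of H S2 "\<lambda>c. x @ fp_inr H c" FP TT, OF edge_map_R[OF assms(1,2)] n assms(4)])
qed

lemma fp_from_nil: "fp_reduced G H w \<Longrightarrow> \<exists>n. walk FP TT [] w n"
proof (induction "length w" arbitrary: w rule: less_induct)
  case less
  show ?case
  proof (cases w rule: rev_cases)
    case Nil then show ?thesis by (auto intro: walk.w0)
  next
    case (snoc y z)
    have ry: "fp_reduced G H y" and lz: "lok G H z" and alt: "y = [] \<or> isl (last y) \<noteq> isl z"
      using less.prems snoc by (auto simp: fp_reduced_append fp_reduced_Cons)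
    obtain n1 where n1: "walk FP TT [] y n1" using less.hyps[of y] ry snoc by auto
    show ?thesis
    proof (cases z)
      case (Inl a)
      have ny: "notl y" using alt Inl by (auto simp: notl_def)
      have a: "a \<in> carrier G" "a \<noteq> \<one>\<^bsub>G\<^esub>" using lz Inl by auto
      obtain m where "walk FP TT (y @ fp_inl G \<one>\<^bsub>G\<^esub>) (y @ fp_inl G a) m"
        using embed_conn_L[OF ry ny oneG a(1)] by blast
      then have "walk FP TT y w m" using snoc Inl a by (simp add: fp_inl_def)
      then show ?thesis using walk_trans[OF n1] by blast
    next
      case (Inr a)
      have ny: "notr y" using alt Inr by (auto simp: notr_def)
      have a: "a \<in> carrier H" "a \<noteq> \<one>\<^bsub>H\<^esub>" using lz Inr by auto
      obtain m where "walk FP TT (y @ fp_inr H \<one>\<^bsub>H\<^esub>) (y @ fp_inr H a) m"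
        using embed_conn_R[OF ry ny oneH a(1)] by blast
      then have "walk FP TT y w m" using snoc Inr a by (simp add: fp_inr_def)
      then show ?thesis using walk_trans[OF n1] by blast
    qed
  qed
qed

lemma fp_connected:
  assumes "fp_reduced G H u" "fp_reduced G H v"
  shows "\<exists>n. walk FP TT u v n"
proof -
  obtain n1 n2 where "walk FP TT [] u n1" "walk FP TT [] v n2" using fp_from_nil assms by metis
  note w = this
  have "walk FP TT u [] n1" using walk_sym[OF w(1)] assms(1) by simp
  from walk_trans[OF this w(2)] show ?thesis by blast
qed

definition Br_L where "Br_L x u \<longleftrightarrow> (\<exists>c r. u = x @ Inl c # r)"
definition pl_L where "pl_L x u = (if Br_L x u then projl (u ! length x) else \<one>\<^bsub>G\<^esub>)"

lemma pl_L_simp: "pl_L x (x @ Inl c # r) = c" by (auto simp: pl_L_def Br_L_def)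
lemma not_Br_L_self: "\<not> Br_L x x" by (simp add: Br_L_def)
lemma pl_L_emb: "pl_L x (x @ fp_inl G a) = a"
  by (cases "a = \<one>\<^bsub>G\<^esub>") (auto simp: fp_inl_def pl_L_def Br_L_def)

lemma edge_Br_L:
  assumes "fp_reduced G H x" "notl x" "fp_reduced G H u" "fp_reduced G H v"
    "cayley_edge FP TT u v" "u = x @ Inl c # r"
  shows "(\<exists>c' r'. v = x @ Inl c' # r' \<and> (c' = c \<or> cayley_edge G S1 c c')) \<or>
         (v = x \<and> cayley_edge G S1 c \<one>\<^bsub>G\<^esub>)"
proof -
  from fpD_L[OF assms(3,4,5)] show ?thesis
  proof (elim disjE exE conjE)
    fix y a b assume ry: "fp_reduced G H y" "notl y" and u: "u = y @ fp_inl G a"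
      and v: "v = y @ fp_inl G b" and e: "cayley_edge G S1 a b" and bc: "b \<in> carrier G"
    show ?thesis
    proof (cases "a = \<one>\<^bsub>G\<^esub>")
      case True
      then have "v = x @ Inl c # (r @ fp_inl G b)" using u v assms(6) by simp
      then show ?thesis by (intro disjI1 exI[of _ c] exI[of _ "r @ fp_inl G b"]) simp
    next
      case False
      then have u': "y @ [Inl a] = x @ Inl c # r" using u assms(6) by (simp add: fp_inl_def)
      show ?thesis
      proof (cases "r = []")
        case True
        then have yx: "y = x" "a = c" using u' by auto
        show ?thesis
        proof (cases "b = \<one>\<^bsub>G\<^esub>")
          case True
          then show ?thesis using v e yx by (intro disjI2) simp
        next
          case False
          then have "v = x @ Inl b # []" using v yx by (simp add: fp_inl_def)
          then show ?thesis using e yx by (intro disjI1 exI[of _ b] exI[of _ "[]"]) simp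
        qed
      next
        case False
        then have "y = x @ Inl c # butlast r" using butlast_eq[OF u'] by blast
        then have "v = x @ Inl c # (butlast r @ fp_inl G b)" using v by simp
        then show ?thesis by (intro disjI1 exI[of _ c] exI[of _ "butlast r @ fp_inl G b"]) simp
      qed
    qed
  next
    fix y a b assume ry: "fp_reduced G H y" "notr y" and u: "u = y @ fp_inr H a"
      and v: "v = y @ fp_inr H b" and e: "cayley_edge H S2 a b" and bc: "b \<in> carrier H"
    show ?thesis
    proof (cases "a = \<one>\<^bsub>H\<^esub>")
      case True
      then have "v = x @ Inl c # (r @ fp_inr H b)" using u v assms(6) by simp
      then show ?thesis by (intro disjI1 exI[of _ c] exI[of _ "r @ fp_inr H b"]) simp
    next
      case False
      then have u': "y @ [Inr a] = x @ Inl c # r" using u assms(6) by (simp add: fp_inr_def)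
      then have "r \<noteq> []" by auto
      then have "y = x @ Inl c # butlast r" using butlast_eq[OF u'] by blast
      then have "v = x @ Inl c # (butlast r @ fp_inr H b)" using v by simp
      then show ?thesis by (intro disjI1 exI[of _ c] exI[of _ "butlast r @ fp_inr H b"]) simp
    qed
  qed
qed

lemma lip_L:
  assumes "fp_reduced G H x" "notl x" "fp_reduced G H u" "fp_reduced G H v" "cayley_edge FP TT u v"
  shows "pl_L x u = pl_L x v \<or> cayley_edge G S1 (pl_L x u) (pl_L x v)"
proof (cases "Br_L x u")
  case True
  then obtain c r where u: "u = x @ Inl c # r" by (auto simp: Br_L_def)
  from edge_Br_L[OF assms u] show ?thesis
  proof
    assume "\<exists>c' r'. v = x @ Inl c' # r' \<and> (c' = c \<or> cayley_edge G S1 c c')"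
    then show ?thesis using u by (auto simp: pl_L_simp)
  next
    assume "v = x \<and> cayley_edge G S1 c \<one>\<^bsub>G\<^esub>"
    then show ?thesis using u by (auto simp: pl_L_simp pl_L_def not_Br_L_self)
  qed
next
  case False
  show ?thesis
  proof (cases "Br_L x v")
    case True
    then obtain c r where v: "v = x @ Inl c # r" by (auto simp: Br_L_def)
    have e': "cayley_edge FP TT v u" using edge_sym[OF assms(5)] assms(4) by simp
    from edge_Br_L[OF assms(1,2,4,3) e' v] False
    have "u = x \<and> cayley_edge G S1 c \<one>\<^bsub>G\<^esub>" by (auto simp: Br_L_def)
    then have "cayley_edge G S1 \<one>\<^bsub>G\<^esub> c" using edge_sym[OF _ oneG] by blast
    then show ?thesis using False v by (simp add: pl_L_def pl_L_simp)
  next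
    case False2: False
    then show ?thesis using False by (simp add: pl_L_def)
  qed
qed

lemma cut_L:
  "walk FP TT u z n \<Longrightarrow> fp_reduced G H x \<Longrightarrow> notl x \<Longrightarrow> fp_reduced G H z \<Longrightarrow> Br_L x u \<Longrightarrow>
   \<not> Br_L x z \<Longrightarrow> \<exists>k m. k + m = n \<and> walk FP TT u x k \<and> walk FP TT x z m"
proof (induction rule: walk.induct)
  case (w0 g) then show ?case by simp
next
  case (wS g h z' n)
  have rh: "fp_reduced G H h" using walk_carrier[OF wS.hyps(2)] wS.prems by simp
  have rg: "fp_reduced G H g" using wS.hyps(1) by (simp add: cayley_edge_def)
  obtain c r where g: "g = x @ Inl c # r" using wS.prems by (auto simp: Br_L_def)
  from edge_Br_L[OF wS.prems(1,2) rg rh wS.hyps(1) g]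
  show ?case
  proof
    assume "\<exists>c' r'. h = x @ Inl c' # r' \<and> (c' = c \<or> cayley_edge G S1 c c')"
    then have "Br_L x h" by (auto simp: Br_L_def)
    then obtain k m where km: "k + m = n" "walk FP TT h x k" "walk FP TT x z' m" using wS.IH[OF wS.prems(1,2,3) \<open>Br_L x h\<close> wS.prems(5)] by blast
    have "walk FP TT g x (Suc k)" by (rule walk.wS[OF wS.hyps(1) km(2)])
    then show ?case using km by (intro exI[of _ "Suc k"] exI[of _ m]) simp
  next
    assume "h = x \<and> cayley_edge G S1 c \<one>\<^bsub>G\<^esub>"
    then show ?case using wS.hyps by (intro exI[of _ 1] exI[of _ n]) (use walk_edge in auto)
  qed
qed

lemma dist_emb_L:
  assumes "fp_reduced G H x" "notl x" "a \<in> carrier G" "b \<in> carrier G"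
  shows "cayley_dist FP TT (x @ fp_inl G a) (x @ fp_inl G b) = cayley_dist G S1 a b"
proof -
  have r: "fp_reduced G H (x @ fp_inl G a)" "fp_reduced G H (x @ fp_inl G b)"
    using red_inl[OF assms(1,2,3)] red_inl[OF assms(1,2,4)] by auto
  obtain n where n: "walk FP TT (x @ fp_inl G a) (x @ fp_inl G b) n" using fp_connected[OF r] by blast
  have "cayley_dist G S1 (pl_L x (x @ fp_inl G a)) (pl_L x (x @ fp_inl G b))
        \<le> cayley_dist FP TT (x @ fp_inl G a) (x @ fp_inl G b)"
  proof (rule dist_map[of FP TT "pl_L x" G S1, OF _ n])
    show "x @ fp_inl G b \<in> carrier FP" using r by simp
    fix u v assume "u \<in> carrier FP" "v \<in> carrier FP" "cayley_edge FP TT u v"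
    then show "pl_L x u = pl_L x v \<or> cayley_edge G S1 (pl_L x u) (pl_L x v)"
      using lip_L[OF assms(1,2), of u v] by simp
  qed
  then show ?thesis using embed_dist_L[OF assms] by (simp add: pl_L_emb)
qed

lemma dist_cut_L:
  assumes "fp_reduced G H x" "notl x" "c \<in> carrier G" "c \<noteq> \<one>\<^bsub>G\<^esub>" "fp_reduced G H z" "\<not> Br_L x z"
  shows "cayley_dist FP TT (x @ [Inl c]) z = cayley_dist G S1 c \<one>\<^bsub>G\<^esub> + cayley_dist FP TT x z"
proof -
  have yx: "cayley_dist FP TT (x @ [Inl c]) x = cayley_dist G S1 c \<one>\<^bsub>G\<^esub>"
    using dist_emb_L[OF assms(1,2,3) oneG] assms(4) by (simp add: fp_inl_def)
  have ry: "fp_reduced G H (x @ [Inl c])" using red_inl[OF assms(1,2,3)] assms(4) by (simp add: fp_inl_def)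
  obtain n where nw: "walk FP TT (x @ [Inl c]) z n" using fp_connected[OF ry assms(5)] by blast
  obtain m where m: "walk FP TT (x @ [Inl c]) z m" "cayley_dist FP TT (x @ [Inl c]) z = real m"
    using dist_walk[OF nw] by blast
  have "Br_L x (x @ [Inl c])" by (simp add: Br_L_def)
  then obtain k m' where km: "k + m' = m" "walk FP TT (x @ [Inl c]) x k" "walk FP TT x z m'"
    using cut_L[OF m(1) assms(1,2,5)] assms(6) by blast
  have "cayley_dist FP TT (x @ [Inl c]) x \<le> k" "cayley_dist FP TT x z \<le> m'"
    using dist_le[OF km(2)] dist_le[OF km(3)] by auto
  then have ge: "cayley_dist FP TT (x @ [Inl c]) z \<ge> cayley_dist G S1 c \<one>\<^bsub>G\<^esub> + cayley_dist FP TT x z"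
    using m(2) km(1) yx by simp
  have le: "cayley_dist FP TT (x @ [Inl c]) z \<le> cayley_dist FP TT (x @ [Inl c]) x + cayley_dist FP TT x z"
    using dist_tri[OF km(2,3)] .
  show ?thesis using ge le yx by simp
qed

definition Br_R where "Br_R x u \<longleftrightarrow> (\<exists>c r. u = x @ Inr c # r)"
definition pl_R where "pl_R x u = (if Br_R x u then projr (u ! length x) else \<one>\<^bsub>H\<^esub>)"

lemma pl_R_simp: "pl_R x (x @ Inr c # r) = c" by (auto simp: pl_R_def Br_R_def)
lemma not_Br_R_self: "\<not> Br_R x x" by (simp add: Br_R_def)
lemma pl_R_emb: "pl_R x (x @ fp_inr H a) = a"
  by (cases "a = \<one>\<^bsub>H\<^esub>") (auto simp: fp_inr_def pl_R_def Br_R_def)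

lemma edge_Br_R:
  assumes "fp_reduced G H x" "notr x" "fp_reduced G H u" "fp_reduced G H v"
    "cayley_edge FP TT u v" "u = x @ Inr c # r"
  shows "(\<exists>c' r'. v = x @ Inr c' # r' \<and> (c' = c \<or> cayley_edge H S2 c c')) \<or>
         (v = x \<and> cayley_edge H S2 c \<one>\<^bsub>H\<^esub>)"
proof -
  from fpD_R[OF assms(3,4,5)] show ?thesis
  proof (elim disjE exE conjE)
    fix y a b assume ry: "fp_reduced G H y" "notr y" and u: "u = y @ fp_inr H a"
      and v: "v = y @ fp_inr H b" and e: "cayley_edge H S2 a b" and bc: "b \<in> carrier H"
    show ?thesis
    proof (cases "a = \<one>\<^bsub>H\<^esub>")
      case True
      then have "v = x @ Inr c # (r @ fp_inr H b)" using u v assms(6) by simp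
      then show ?thesis by (intro disjI1 exI[of _ c] exI[of _ "r @ fp_inr H b"]) simp
    next
      case False
      then have u': "y @ [Inr a] = x @ Inr c # r" using u assms(6) by (simp add: fp_inr_def)
      show ?thesis
      proof (cases "r = []")
        case True
        then have yx: "y = x" "a = c" using u' by auto
        show ?thesis
        proof (cases "b = \<one>\<^bsub>H\<^esub>")
          case True
          then show ?thesis using v e yx by (intro disjI2) simp
        next
          case False
          then have "v = x @ Inr b # []" using v yx by (simp add: fp_inr_def)
          then show ?thesis using e yx by (intro disjI1 exI[of _ b] exI[of _ "[]"]) simp
        qed
      next
        case False
        then have "y = x @ Inr c # butlast r" using butlast_eq[OF u'] by blast
        then have "v = x @ Inr c # (butlast r @ fp_inr H b)" using v by simp
        then show ?thesis by (intro disjI1 exI[of _ c] exI[of _ "butlast r @ fp_inr H b"]) simp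
      qed
    qed
  next
    fix y a b assume ry: "fp_reduced G H y" "notl y" and u: "u = y @ fp_inl G a"
      and v: "v = y @ fp_inl G b" and e: "cayley_edge G S1 a b" and bc: "b \<in> carrier G"
    show ?thesis
    proof (cases "a = \<one>\<^bsub>G\<^esub>")
      case True
      then have "v = x @ Inr c # (r @ fp_inl G b)" using u v assms(6) by simp
      then show ?thesis by (intro disjI1 exI[of _ c] exI[of _ "r @ fp_inl G b"]) simp
    next
      case False
      then have u': "y @ [Inl a] = x @ Inr c # r" using u assms(6) by (simp add: fp_inl_def)
      then have "r \<noteq> []" by auto
      then have "y = x @ Inr c # butlast r" using butlast_eq[OF u'] by blast
      then have "v = x @ Inr c # (butlast r @ fp_inl G b)" using v by simp
      then show ?thesis by (intro disjI1 exI[of _ c] exI[of _ "butlast r @ fp_inl G b"]) simp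
    qed
  qed
qed

lemma lip_R:
  assumes "fp_reduced G H x" "notr x" "fp_reduced G H u" "fp_reduced G H v" "cayley_edge FP TT u v"
  shows "pl_R x u = pl_R x v \<or> cayley_edge H S2 (pl_R x u) (pl_R x v)"
proof (cases "Br_R x u")
  case True
  then obtain c r where u: "u = x @ Inr c # r" by (auto simp: Br_R_def)
  from edge_Br_R[OF assms u] show ?thesis
  proof
    assume "\<exists>c' r'. v = x @ Inr c' # r' \<and> (c' = c \<or> cayley_edge H S2 c c')"
    then show ?thesis using u by (auto simp: pl_R_simp)
  next
    assume "v = x \<and> cayley_edge H S2 c \<one>\<^bsub>H\<^esub>"
    then show ?thesis using u by (auto simp: pl_R_simp pl_R_def not_Br_R_self)
  qed
next
  case False
  show ?thesis
  proof (cases "Br_R x v")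
    case True
    then obtain c r where v: "v = x @ Inr c # r" by (auto simp: Br_R_def)
    have e': "cayley_edge FP TT v u" using edge_sym[OF assms(5)] assms(4) by simp
    from edge_Br_R[OF assms(1,2,4,3) e' v] False
    have "u = x \<and> cayley_edge H S2 c \<one>\<^bsub>H\<^esub>" by (auto simp: Br_R_def)
    then have "cayley_edge H S2 \<one>\<^bsub>H\<^esub> c" using edge_sym[OF _ oneH] by blast
    then show ?thesis using False v by (simp add: pl_R_def pl_R_simp)
  next
    case False2: False
    then show ?thesis using False by (simp add: pl_R_def)
  qed
qed

lemma cut_R:
  "walk FP TT u z n \<Longrightarrow> fp_reduced G H x \<Longrightarrow> notr x \<Longrightarrow> fp_reduced G H z \<Longrightarrow> Br_R x u \<Longrightarrow>
   \<not> Br_R x z \<Longrightarrow> \<exists>k m. k + m = n \<and> walk FP TT u x k \<and> walk FP TT x z m"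
proof (induction rule: walk.induct)
  case (w0 g) then show ?case by simp
next
  case (wS g h z' n)
  have rh: "fp_reduced G H h" using walk_carrier[OF wS.hyps(2)] wS.prems by simp
  have rg: "fp_reduced G H g" using wS.hyps(1) by (simp add: cayley_edge_def)
  obtain c r where g: "g = x @ Inr c # r" using wS.prems by (auto simp: Br_R_def)
  from edge_Br_R[OF wS.prems(1,2) rg rh wS.hyps(1) g]
  show ?case
  proof
    assume "\<exists>c' r'. h = x @ Inr c' # r' \<and> (c' = c \<or> cayley_edge H S2 c c')"
    then have "Br_R x h" by (auto simp: Br_R_def)
    then obtain k m where km: "k + m = n" "walk FP TT h x k" "walk FP TT x z' m" using wS.IH[OF wS.prems(1,2,3) \<open>Br_R x h\<close> wS.prems(5)] by blast
    have "walk FP TT g x (Suc k)" by (rule walk.wS[OF wS.hyps(1) km(2)])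
    then show ?case using km by (intro exI[of _ "Suc k"] exI[of _ m]) simp
  next
    assume "h = x \<and> cayley_edge H S2 c \<one>\<^bsub>H\<^esub>"
    then show ?case using wS.hyps by (intro exI[of _ 1] exI[of _ n]) (use walk_edge in auto)
  qed
qed

lemma dist_emb_R:
  assumes "fp_reduced G H x" "notr x" "a \<in> carrier H" "b \<in> carrier H"
  shows "cayley_dist FP TT (x @ fp_inr H a) (x @ fp_inr H b) = cayley_dist H S2 a b"
proof -
  have r: "fp_reduced G H (x @ fp_inr H a)" "fp_reduced G H (x @ fp_inr H b)"
    using red_inr[OF assms(1,2,3)] red_inr[OF assms(1,2,4)] by auto
  obtain n where n: "walk FP TT (x @ fp_inr H a) (x @ fp_inr H b) n" using fp_connected[OF r] by blast
  have "cayley_dist H S2 (pl_R x (x @ fp_inr H a)) (pl_R x (x @ fp_inr H b))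
        \<le> cayley_dist FP TT (x @ fp_inr H a) (x @ fp_inr H b)"
  proof (rule dist_map[of FP TT "pl_R x" H S2, OF _ n])
    show "x @ fp_inr H b \<in> carrier FP" using r by simp
    fix u v assume "u \<in> carrier FP" "v \<in> carrier FP" "cayley_edge FP TT u v"
    then show "pl_R x u = pl_R x v \<or> cayley_edge H S2 (pl_R x u) (pl_R x v)"
      using lip_R[OF assms(1,2), of u v] by simp
  qed
  then show ?thesis using embed_dist_R[OF assms] by (simp add: pl_R_emb)
qed

lemma dist_cut_R:
  assumes "fp_reduced G H x" "notr x" "c \<in> carrier H" "c \<noteq> \<one>\<^bsub>H\<^esub>" "fp_reduced G H z" "\<not> Br_R x z"
  shows "cayley_dist FP TT (x @ [Inr c]) z = cayley_dist H S2 c \<one>\<^bsub>H\<^esub> + cayley_dist FP TT x z"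
proof -
  have yx: "cayley_dist FP TT (x @ [Inr c]) x = cayley_dist H S2 c \<one>\<^bsub>H\<^esub>"
    using dist_emb_R[OF assms(1,2,3) oneH] assms(4) by (simp add: fp_inr_def)
  have ry: "fp_reduced G H (x @ [Inr c])" using red_inr[OF assms(1,2,3)] assms(4) by (simp add: fp_inr_def)
  obtain n where nw: "walk FP TT (x @ [Inr c]) z n" using fp_connected[OF ry assms(5)] by blast
  obtain m where m: "walk FP TT (x @ [Inr c]) z m" "cayley_dist FP TT (x @ [Inr c]) z = real m"
    using dist_walk[OF nw] by blast
  have "Br_R x (x @ [Inr c])" by (simp add: Br_R_def)
  then obtain k m' where km: "k + m' = m" "walk FP TT (x @ [Inr c]) x k" "walk FP TT x z m'"
    using cut_R[OF m(1) assms(1,2,5)] assms(6) by blast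
  have "cayley_dist FP TT (x @ [Inr c]) x \<le> k" "cayley_dist FP TT x z \<le> m'"
    using dist_le[OF km(2)] dist_le[OF km(3)] by auto
  then have ge: "cayley_dist FP TT (x @ [Inr c]) z \<ge> cayley_dist H S2 c \<one>\<^bsub>H\<^esub> + cayley_dist FP TT x z"
    using m(2) km(1) yx by simp
  have le: "cayley_dist FP TT (x @ [Inr c]) z \<le> cayley_dist FP TT (x @ [Inr c]) x + cayley_dist FP TT x z"
    using dist_tri[OF km(2,3)] .
  show ?thesis using ge le yx by simp
qed

end


definition Qf :: "'x set \<Rightarrow> ('x \<Rightarrow> complex) \<Rightarrow> ('x \<Rightarrow> 'x \<Rightarrow> real) \<Rightarrow> complex" where
  "Qf A f K = (\<Sum>x\<in>A. \<Sum>y\<in>A. f x * cnj (f y) * complex_of_real (K x y))"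

lemma sum_split: "finite A \<Longrightarrow> L \<subseteq> A \<Longrightarrow> sum F A = sum F L + sum F (A - L)"
  by (metis add.commute sum.subset_diff)

lemma Q_update:
  fixes f :: "'x \<Rightarrow> complex"
  assumes fin: "finite B" and fz: "\<forall>z. z \<notin> B \<longrightarrow> f z = 0"
  shows "Qf (insert x0 B) (f(x0 := f x0 + m)) K = Qf B f K
     + m * (\<Sum>y\<in>B. cnj (f y) * complex_of_real (K x0 y))
     + cnj m * (\<Sum>x\<in>B. f x * complex_of_real (K x x0))
     + m * cnj m * complex_of_real (K x0 x0)"
proof -
  let ?U = "insert x0 B"
  let ?K = "\<lambda>x y. complex_of_real (K x y)"
  define d where "d z = (if z = x0 then (1::complex) else 0)" for z
  have g: "f(x0 := f x0 + m) = (\<lambda>z. f z + m * d z)" by (auto simp: d_def)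
  have finU: "finite ?U" using fin by simp
  have dl: "\<And>F. (\<Sum>y\<in>?U. F y * d y) = F x0"
    unfolding d_def by (simp add: if_distrib[of "\<lambda>t. _ * t"] sum.delta[OF finU] cong: if_cong)
  have cd: "\<And>y. cnj (d y) = d y" by (simp add: d_def)
  have dl': "\<And>F. (\<Sum>y\<in>?U. F y * cnj (d y)) = F x0" by (simp add: cd dl)
  have fU: "\<And>F. (\<Sum>y\<in>?U. f y * F y) = (\<Sum>y\<in>B. f y * F y)"
    by (rule sum.mono_neutral_right) (use fin fz in auto)
  have fU': "\<And>F. (\<Sum>y\<in>?U. cnj (f y) * F y) = (\<Sum>y\<in>B. cnj (f y) * F y)"
    by (rule sum.mono_neutral_right) (use fin fz in auto)
  have "Qf ?U (\<lambda>z. f z + m * d z) K =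
     (\<Sum>x\<in>?U. \<Sum>y\<in>?U. f x * cnj (f y) * ?K x y) +
     (\<Sum>x\<in>?U. \<Sum>y\<in>?U. f x * cnj m * (cnj (d y) * ?K x y)) +
     (\<Sum>x\<in>?U. \<Sum>y\<in>?U. m * d x * cnj (f y) * ?K x y) +
     (\<Sum>x\<in>?U. \<Sum>y\<in>?U. m * cnj m * d x * (cnj (d y) * ?K x y))"
    unfolding Qf_def by (simp add: algebra_simps sum.distrib)
  also have "(\<Sum>x\<in>?U. \<Sum>y\<in>?U. f x * cnj (f y) * ?K x y) = Qf B f K"
  proof -
    have "(\<Sum>x\<in>?U. \<Sum>y\<in>?U. f x * cnj (f y) * ?K x y) = (\<Sum>x\<in>?U. f x * (\<Sum>y\<in>?U. cnj (f y) * ?K x y))"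
      by (simp add: sum_distrib_left mult.assoc)
    also have "\<dots> = (\<Sum>x\<in>B. f x * (\<Sum>y\<in>B. cnj (f y) * ?K x y))"
      by (simp add: fU fU')
    finally show ?thesis unfolding Qf_def by (simp add: sum_distrib_left mult.assoc)
  qed
  also have "(\<Sum>x\<in>?U. \<Sum>y\<in>?U. f x * cnj m * (cnj (d y) * ?K x y)) = cnj m * (\<Sum>x\<in>B. f x * ?K x x0)"
  proof -
    have "(\<Sum>x\<in>?U. \<Sum>y\<in>?U. f x * cnj m * (cnj (d y) * ?K x y)) = (\<Sum>x\<in>?U. f x * cnj m * (\<Sum>y\<in>?U. ?K x y * cnj (d y)))"
      by (simp add: sum_distrib_left mult.commute)
    also have "\<dots> = (\<Sum>x\<in>?U. f x * (cnj m * ?K x x0))" by (simp add: dl' mult.assoc)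
    also have "\<dots> = (\<Sum>x\<in>B. f x * (cnj m * ?K x x0))" by (rule fU)
    finally show ?thesis by (simp add: sum_distrib_left algebra_simps)
  qed
  also have "(\<Sum>x\<in>?U. \<Sum>y\<in>?U. m * d x * cnj (f y) * ?K x y) = m * (\<Sum>y\<in>B. cnj (f y) * ?K x0 y)"
  proof -
    have "(\<Sum>x\<in>?U. \<Sum>y\<in>?U. m * d x * cnj (f y) * ?K x y) = (\<Sum>y\<in>?U. \<Sum>x\<in>?U. m * d x * cnj (f y) * ?K x y)"
      by (rule sum.swap)
    also have "\<dots> = (\<Sum>y\<in>?U. cnj (f y) * m * (\<Sum>x\<in>?U. ?K x y * d x))"
      by (simp add: sum_distrib_left mult.commute mult.left_commute)
    also have "\<dots> = (\<Sum>y\<in>?U. cnj (f y) * (m * ?K x0 y))" by (simp add: dl mult.assoc)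
    also have "\<dots> = (\<Sum>y\<in>B. cnj (f y) * (m * ?K x0 y))" by (rule fU')
    finally show ?thesis by (simp add: sum_distrib_left algebra_simps)
  qed
  also have "(\<Sum>x\<in>?U. \<Sum>y\<in>?U. m * cnj m * d x * (cnj (d y) * ?K x y)) = m * cnj m * ?K x0 x0"
  proof -
    have "(\<Sum>x\<in>?U. \<Sum>y\<in>?U. m * cnj m * d x * (cnj (d y) * ?K x y)) = (\<Sum>x\<in>?U. m * cnj m * d x * (\<Sum>y\<in>?U. ?K x y * cnj (d y)))"
      by (simp add: sum_distrib_left mult.commute)
    also have "\<dots> = (\<Sum>x\<in>?U. (m * cnj m * ?K x x0) * d x)"
    proof (rule sum.cong[OF refl])
      fix x
      have "(\<Sum>y\<in>?U. ?K x y * cnj (d y)) = ?K x x0" by (rule dl')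
      then show "m * cnj m * d x * (\<Sum>y\<in>?U. ?K x y * cnj (d y)) = (m * cnj m * ?K x x0) * d x"
        by simp
    qed
    also have "\<dots> = m * cnj m * ?K x0 x0" by (rule dl)
    finally show ?thesis .
  qed
  finally show ?thesis unfolding g by (simp add: algebra_simps)
qed


lemma step_identity:
  fixes e :: "'m \<Rightarrow> 'x" and lam :: "'x \<Rightarrow> complex" and K :: "'x \<Rightarrow> 'x \<Rightarrow> real"
    and KM :: "'m \<Rightarrow> 'm \<Rightarrow> real"
  assumes finA: "finite A" and lz: "\<forall>z. z \<notin> A \<longrightarrow> lam z = 0" and sum0: "(\<Sum>z\<in>A. lam z) = 0"
    and o1: "o1 \<in> CM" and inj: "inj_on e CM" and e1: "e o1 = x0"
    and dM: "\<And>c c'. c \<in> CM \<Longrightarrow> c' \<in> CM \<Longrightarrow> K (e c) (e c') = KM c c'"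
    and dC1: "\<And>c z. c \<in> CM \<Longrightarrow> c \<noteq> o1 \<Longrightarrow> z \<in> A \<Longrightarrow> z \<notin> e ` (CM - {o1}) \<Longrightarrow>
                K (e c) z = KM c o1 + K x0 z"
    and dC2: "\<And>c z. c \<in> CM \<Longrightarrow> c \<noteq> o1 \<Longrightarrow> z \<in> A \<Longrightarrow> z \<notin> e ` (CM - {o1}) \<Longrightarrow>
                K z (e c) = K z x0 + KM o1 c"
    and K00: "K x0 x0 = 0" and KM00: "KM o1 o1 = 0"
    and L_def: "L = A \<inter> e ` (CM - {o1})"
    and CL_def: "CL = {c \<in> CM - {o1}. e c \<in> A}"
    and M_def: "M = (\<Sum>y\<in>L. lam y)"
    and A0_def: "A0 = A - L"
    and f0_def: "f0 = (\<lambda>z. if z \<in> A0 then lam z else 0)"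
    and mu_def: "mu = (\<lambda>c. if c = o1 then - M else if c \<in> CL then lam (e c) else 0)"
  shows "Qf A lam K = Qf (insert o1 CL) mu KM + Qf (insert x0 A0) (f0(x0 := f0 x0 + M)) K"
proof -
  let ?K = "\<lambda>x y. complex_of_real (K x y)"
  let ?KM = "\<lambda>x y. complex_of_real (KM x y)"
  have Lsub: "L \<subseteq> A" unfolding L_def by blast
  have finL: "finite L" using finA Lsub finite_subset by blast
  have LCL: "L = e ` CL" unfolding L_def CL_def by blast
  have injCL: "inj_on e CL" using inj unfolding CL_def by (rule inj_on_subset) blast
  have finCL: "finite CL" using finL LCL injCL finite_image_iff by metis
  have o1CL: "o1 \<notin> CL" unfolding CL_def by blast
  have finA0: "finite A0" unfolding A0_def using finA by simp
  have reL: "\<And>F. (\<Sum>x\<in>L. F x) = (\<Sum>c\<in>CL. F (e c))"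
    unfolding LCL by (simp add: sum.reindex[OF injCL])
  have MCL: "M = (\<Sum>c\<in>CL. lam (e c))" unfolding M_def by (rule reL)
  have S0: "(\<Sum>y\<in>A0. lam y) = - M"
    using sum0 sum_split[OF finA Lsub, of lam] unfolding M_def A0_def by (simp add: eq_neg_iff_add_eq_0 add.commute)
  have CLprops: "\<And>c. c \<in> CL \<Longrightarrow> c \<in> CM \<and> c \<noteq> o1" unfolding CL_def by blast
  have A0props: "\<And>z. z \<in> A0 \<Longrightarrow> z \<in> A \<and> z \<notin> e ` (CM - {o1})" unfolding A0_def L_def by blast
  define P1 where "P1 = (\<Sum>c\<in>CL. lam (e c) * ?KM c o1)"
  define P2 where "P2 = (\<Sum>c\<in>CL. cnj (lam (e c)) * ?KM o1 c)"
  define R1 where "R1 = (\<Sum>y\<in>A0. cnj (lam y) * ?K x0 y)"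
  define R2 where "R2 = (\<Sum>x\<in>A0. lam x * ?K x x0)"
  define XLL where "XLL = (\<Sum>c\<in>CL. \<Sum>c'\<in>CL. mu c * cnj (mu c') * ?KM c c')"
  define D where "D = (\<Sum>x\<in>A0. \<Sum>y\<in>A0. lam x * cnj (lam y) * ?K x y)"
  have QA: "Qf A lam K = (\<Sum>x\<in>L. \<Sum>y\<in>L. lam x * cnj (lam y) * ?K x y)
      + (\<Sum>x\<in>L. \<Sum>y\<in>A0. lam x * cnj (lam y) * ?K x y)
      + (\<Sum>x\<in>A0. \<Sum>y\<in>L. lam x * cnj (lam y) * ?K x y) + D"
    unfolding Qf_def D_def A0_def by (simp add: sum_split[OF finA Lsub] sum.distrib)
  have T1: "(\<Sum>x\<in>L. \<Sum>y\<in>L. lam x * cnj (lam y) * ?K x y) = XLL"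
    unfolding XLL_def reL
  proof (rule sum.cong[OF refl], rule sum.cong[OF refl])
    fix c c' assume "c \<in> CL" "c' \<in> CL"
    then show "lam (e c) * cnj (lam (e c')) * ?K (e c) (e c') = mu c * cnj (mu c') * ?KM c c'"
      using CLprops dM unfolding mu_def by auto
  qed
  have T2: "(\<Sum>x\<in>L. \<Sum>y\<in>A0. lam x * cnj (lam y) * ?K x y) = P1 * cnj (- M) + M * R1"
  proof -
    have "(\<Sum>x\<in>L. \<Sum>y\<in>A0. lam x * cnj (lam y) * ?K x y)
        = (\<Sum>c\<in>CL. \<Sum>y\<in>A0. lam (e c) * cnj (lam y) * (?KM c o1 + ?K x0 y))"
      unfolding reL
    proof (rule sum.cong[OF refl], rule sum.cong[OF refl])
      fix c y assume "c \<in> CL" "y \<in> A0"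
      then show "lam (e c) * cnj (lam y) * ?K (e c) y = lam (e c) * cnj (lam y) * (?KM c o1 + ?K x0 y)"
        using CLprops A0props dC1 by simp
    qed
    also have "\<dots> = (\<Sum>c\<in>CL. lam (e c) * ?KM c o1 * (\<Sum>y\<in>A0. cnj (lam y)))
        + (\<Sum>c\<in>CL. lam (e c) * R1)"
      unfolding R1_def by (simp add: sum.distrib sum_distrib_left algebra_simps)
    also have "(\<Sum>c\<in>CL. lam (e c) * ?KM c o1 * (\<Sum>y\<in>A0. cnj (lam y))) = P1 * cnj (\<Sum>y\<in>A0. lam y)"
      unfolding P1_def by (simp add: cnj_sum sum_distrib_right)
    also have "(\<Sum>c\<in>CL. lam (e c) * R1) = M * R1" unfolding MCL by (simp add: sum_distrib_right)
    finally show ?thesis unfolding S0 .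
  qed
  have T3: "(\<Sum>x\<in>A0. \<Sum>y\<in>L. lam x * cnj (lam y) * ?K x y) = R2 * cnj M + (- M) * P2"
  proof -
    have "(\<Sum>x\<in>A0. \<Sum>y\<in>L. lam x * cnj (lam y) * ?K x y)
        = (\<Sum>x\<in>A0. \<Sum>c\<in>CL. lam x * cnj (lam (e c)) * (?K x x0 + ?KM o1 c))"
      unfolding reL
    proof (rule sum.cong[OF refl], rule sum.cong[OF refl])
      fix x c assume "x \<in> A0" "c \<in> CL"
      then show "lam x * cnj (lam (e c)) * ?K x (e c) = lam x * cnj (lam (e c)) * (?K x x0 + ?KM o1 c)"
        using CLprops A0props dC2 by simp
    qed
    also have "\<dots> = (\<Sum>x\<in>A0. lam x * ?K x x0 * (\<Sum>c\<in>CL. cnj (lam (e c))))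
        + (\<Sum>x\<in>A0. lam x * P2)"
      unfolding P2_def by (simp add: sum.distrib sum_distrib_left algebra_simps)
    also have "(\<Sum>x\<in>A0. lam x * ?K x x0 * (\<Sum>c\<in>CL. cnj (lam (e c)))) = R2 * cnj M"
      unfolding R2_def MCL by (simp add: cnj_sum sum_distrib_right)
    also have "(\<Sum>x\<in>A0. lam x * P2) = (- M) * P2" unfolding S0[symmetric] by (simp add: sum_distrib_right)
    finally show ?thesis .
  qed
  have QC: "Qf (insert o1 CL) mu KM = XLL + (- M) * P2 + P1 * cnj (- M)"
  proof -
    have mu1: "mu o1 = - M" unfolding mu_def by simp
    have muc: "\<And>c. c \<in> CL \<Longrightarrow> mu c = lam (e c)" unfolding mu_def using o1CL by auto
    have "Qf (insert o1 CL) mu KM = mu o1 * cnj (mu o1) * ?KM o1 o1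
       + (\<Sum>c'\<in>CL. mu o1 * cnj (mu c') * ?KM o1 c')
       + (\<Sum>c\<in>CL. mu c * cnj (mu o1) * ?KM c o1) + XLL"
      unfolding Qf_def XLL_def by (simp add: sum.insert[OF finCL o1CL] sum.distrib)
    also have "(\<Sum>c'\<in>CL. mu o1 * cnj (mu c') * ?KM o1 c') = (- M) * P2"
      unfolding P2_def mu1 sum_distrib_left by (rule sum.cong[OF refl]) (simp add: muc)
    also have "(\<Sum>c\<in>CL. mu c * cnj (mu o1) * ?KM c o1) = P1 * cnj (- M)"
      unfolding P1_def mu1 sum_distrib_right by (rule sum.cong[OF refl]) (simp add: muc)
    finally show ?thesis using KM00 by simp
  qed
  have f0z: "\<forall>z. z \<notin> A0 \<longrightarrow> f0 z = 0" unfolding f0_def by simp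
  have QA': "Qf (insert x0 A0) (f0(x0 := f0 x0 + M)) K = D + M * R1 + cnj M * R2"
  proof -
    have "Qf A0 f0 K = D" unfolding Qf_def D_def f0_def
      by (rule sum.cong[OF refl], rule sum.cong[OF refl]) simp
    moreover have "(\<Sum>y\<in>A0. cnj (f0 y) * ?K x0 y) = R1" unfolding R1_def f0_def
      by (rule sum.cong[OF refl]) simp
    moreover have "(\<Sum>x\<in>A0. f0 x * ?K x x0) = R2" unfolding R2_def f0_def
      by (rule sum.cong[OF refl]) simp
    ultimately show ?thesis using Q_update[OF finA0 f0z, of x0 M K] K00 by simp
  qed
  show ?thesis unfolding QA T1 T2 T3 QC QA' by (simp add: algebra_simps)
qed


lemma step_facts:
  fixes e :: "'m \<Rightarrow> 'x" and lam :: "'x \<Rightarrow> complex"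
  assumes finA: "finite A" and lz: "\<forall>z. z \<notin> A \<longrightarrow> lam z = 0" and sum0: "(\<Sum>z\<in>A. lam z) = 0"
    and o1: "o1 \<in> CM" and inj: "inj_on e CM" and e1: "e o1 = x0"
    and L_def: "L = A \<inter> e ` (CM - {o1})"
    and CL_def: "CL = {c \<in> CM - {o1}. e c \<in> A}"
    and M_def: "M = (\<Sum>y\<in>L. lam y)"
    and A0_def: "A0 = A - L"
    and f0_def: "f0 = (\<lambda>z. if z \<in> A0 then lam z else 0)"
    and mu_def: "mu = (\<lambda>c. if c = o1 then - M else if c \<in> CL then lam (e c) else 0)"
  shows "finite (insert o1 CL)" "insert o1 CL \<subseteq> CM" "\<forall>c. c \<notin> insert o1 CL \<longrightarrow> mu c = 0"
    "(\<Sum>c\<in>insert o1 CL. mu c) = 0"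
    "finite (insert x0 A0)" "\<forall>z. z \<notin> insert x0 A0 \<longrightarrow> (f0(x0 := f0 x0 + M)) z = 0"
    "(\<Sum>z\<in>insert x0 A0. (f0(x0 := f0 x0 + M)) z) = 0"
    "(\<exists>z. lam z \<noteq> 0) \<Longrightarrow> (\<exists>c. mu c \<noteq> 0) \<or> (\<exists>z. (f0(x0 := f0 x0 + M)) z \<noteq> 0)"
proof -
  have Lsub: "L \<subseteq> A" unfolding L_def by blast
  have finL: "finite L" using finA Lsub finite_subset by blast
  have LCL: "L = e ` CL" unfolding L_def CL_def by blast
  have injCL: "inj_on e CL" using inj unfolding CL_def by (rule inj_on_subset) blast
  have finCL: "finite CL" using finL LCL injCL finite_image_iff by metis
  have o1CL: "o1 \<notin> CL" unfolding CL_def by blast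
  have finA0: "finite A0" unfolding A0_def using finA by simp
  have MCL: "M = (\<Sum>c\<in>CL. lam (e c))" unfolding M_def LCL by (simp add: sum.reindex[OF injCL])
  have S0: "(\<Sum>y\<in>A0. lam y) = - M"
    using sum0 sum_split[OF finA Lsub, of lam] unfolding M_def A0_def by (simp add: eq_neg_iff_add_eq_0 add.commute)
  have x0L: "x0 \<notin> L" unfolding L_def using inj o1 e1 by (auto dest: inj_onD)
  show "finite (insert o1 CL)" using finCL by simp
  show "insert o1 CL \<subseteq> CM" using o1 unfolding CL_def by blast
  show "\<forall>c. c \<notin> insert o1 CL \<longrightarrow> mu c = 0" unfolding mu_def by simp
  have "(\<Sum>c\<in>insert o1 CL. mu c) = - M + (\<Sum>c\<in>CL. mu c)"
    using finCL o1CL by (simp add: mu_def)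
  also have "(\<Sum>c\<in>CL. mu c) = (\<Sum>c\<in>CL. lam (e c))" unfolding mu_def
    by (rule sum.cong[OF refl]) (use o1CL in auto)
  finally show "(\<Sum>c\<in>insert o1 CL. mu c) = 0" using MCL by simp
  show "finite (insert x0 A0)" using finA0 by simp
  show "\<forall>z. z \<notin> insert x0 A0 \<longrightarrow> (f0(x0 := f0 x0 + M)) z = 0" unfolding f0_def by simp
  show "(\<Sum>z\<in>insert x0 A0. (f0(x0 := f0 x0 + M)) z) = 0"
  proof -
    have f0A: "(\<Sum>z\<in>insert x0 A0. f0 z) = (\<Sum>z\<in>A0. lam z)"
    proof -
      have "(\<Sum>z\<in>insert x0 A0. f0 z) = (\<Sum>z\<in>A0. f0 z)"
        by (rule sum.mono_neutral_right) (use finA0 in \<open>auto simp: f0_def\<close>)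
      also have "\<dots> = (\<Sum>z\<in>A0. lam z)" unfolding f0_def by simp
      finally show ?thesis .
    qed
    have "(\<Sum>z\<in>insert x0 A0. (f0(x0 := f0 x0 + M)) z) = (\<Sum>z\<in>insert x0 A0. f0 z + (if z = x0 then M else 0))"
      by (rule sum.cong[OF refl]) auto
    also have "\<dots> = (\<Sum>z\<in>insert x0 A0. f0 z) + M"
      using finA0 by (simp add: sum.distrib sum.delta)
    finally show ?thesis using f0A S0 by simp
  qed
  assume "\<exists>z. lam z \<noteq> 0"
  then obtain z where z: "lam z \<noteq> 0" by blast
  then have zA: "z \<in> A" using lz by blast
  show "(\<exists>c. mu c \<noteq> 0) \<or> (\<exists>z. (f0(x0 := f0 x0 + M)) z \<noteq> 0)"
  proof (cases "z \<in> L")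
    case True
    then obtain c where c: "c \<in> CL" "z = e c" using LCL by blast
    then have "mu c = lam z" unfolding mu_def using o1CL by auto
    then show ?thesis using z by (intro disjI1 exI[of _ c]) simp
  next
    case False
    then have zA0: "z \<in> A0" using zA unfolding A0_def by blast
    show ?thesis
    proof (cases "z = x0")
      case True
      show ?thesis
      proof (cases "M = 0")
        case True
        then have "(f0(x0 := f0 x0 + M)) x0 = lam x0" using zA0 \<open>z = x0\<close> unfolding f0_def by simp
        then show ?thesis using z \<open>z = x0\<close> by (intro disjI2 exI[of _ x0]) simp
      next
        case False
        then have "mu o1 \<noteq> 0" unfolding mu_def by simp
        then show ?thesis by blast
      qed
    next
      case False
      then have "(f0(x0 := f0 x0 + M)) z = lam z" using zA0 unfolding f0_def by simp
      then show ?thesis using z by (intro disjI2 exI[of _ z]) simp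
    qed
  qed
qed

lemma Qf_support:
  fixes mu :: "'x \<Rightarrow> complex"
  assumes "finite C" "\<forall>z. z \<notin> C \<longrightarrow> mu z = 0"
  shows "Qf C mu K = Qf {x. mu x \<noteq> 0} mu K" "(\<Sum>x\<in>C. mu x) = (\<Sum>x\<in>{x. mu x \<noteq> 0}. mu x)"
proof -
  have sub: "{x. mu x \<noteq> 0} \<subseteq> C" using assms(2) by blast
  have "\<And>F. (\<Sum>x\<in>C. mu x * F x) = (\<Sum>x\<in>{x. mu x \<noteq> 0}. mu x * F x)"
    by (rule sum.mono_neutral_right[symmetric, symmetric]) (use assms sub in auto)
  note s1 = this
  have s2: "\<And>F. (\<Sum>x\<in>C. cnj (mu x) * F x) = (\<Sum>x\<in>{x. mu x \<noteq> 0}. cnj (mu x) * F x)"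
    by (rule sum.mono_neutral_right) (use assms sub in auto)
  let ?S = "{x. mu x \<noteq> 0}"
  have "Qf C mu K = (\<Sum>x\<in>C. mu x * (\<Sum>y\<in>C. cnj (mu y) * complex_of_real (K x y)))"
    unfolding Qf_def by (simp add: sum_distrib_left mult.assoc)
  also have "\<dots> = (\<Sum>x\<in>C. mu x * (\<Sum>y\<in>?S. cnj (mu y) * complex_of_real (K x y)))"
    by (simp only: s2)
  also have "\<dots> = (\<Sum>x\<in>?S. mu x * (\<Sum>y\<in>?S. cnj (mu y) * complex_of_real (K x y)))"
    by (rule s1)
  also have "\<dots> = Qf ?S mu K"
    unfolding Qf_def by (simp add: sum_distrib_left mult.assoc)
  finally show "Qf C mu K = Qf {x. mu x \<noteq> 0} mu K" .
  show "(\<Sum>x\<in>C. mu x) = (\<Sum>x\<in>{x. mu x \<noteq> 0}. mu x)"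
    by (rule sum.mono_neutral_right) (use assms sub in auto)
qed

lemma csnd_use:
  fixes mu :: "'x \<Rightarrow> complex"
  assumes "cond_strict_neg_def X K" "finite C" "C \<subseteq> X" "\<forall>z. z \<notin> C \<longrightarrow> mu z = 0"
    "(\<Sum>z\<in>C. mu z) = 0"
  shows "Qf C mu K \<le> 0 \<and> ((\<exists>z. mu z \<noteq> 0) \<longrightarrow> Qf C mu K < 0)"
proof (cases "\<exists>z. mu z \<noteq> 0")
  case True
  have sub: "{x. mu x \<noteq> 0} \<subseteq> C" using assms(4) by blast
  have "finite {x. mu x \<noteq> 0}" using sub assms(2) finite_subset by blast
  moreover have "{x. mu x \<noteq> 0} \<subseteq> X" using sub assms(3) by blast
  ultimately have "Qf {x. mu x \<noteq> 0} mu K < 0"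
    using assms(1) True Qf_support(2)[OF assms(2,4)] assms(5)
    unfolding cond_strict_neg_def_def Qf_def by auto
  then show ?thesis using Qf_support(1)[OF assms(2,4)] by simp
next
  case False
  then have "Qf C mu K = 0" unfolding Qf_def by simp
  then show ?thesis using False by simp
qed


context fpc
begin

lemma side_step_L:
  assumes hyp: "cond_strict_neg_def (carrier G) (cayley_dist G S1)"
    and finA: "finite A" and Ac: "A \<subseteq> carrier FP" and lz: "\<forall>z. z \<notin> A \<longrightarrow> lam z = 0"
    and sum0: "(\<Sum>z\<in>A. lam z) = 0"
    and xA: "x \<in> A" and xmax: "\<forall>z\<in>A. length z \<le> length x" and xl: "x = x' @ [Inl a]"
    and IH: "\<And>A' lam'. finite A' \<Longrightarrow> A' \<subseteq> carrier FP \<Longrightarrow> \<forall>z. z \<notin> A' \<longrightarrow> lam' z = 0 \<Longrightarrow>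
      (\<Sum>z\<in>A'. lam' z) = 0 \<Longrightarrow> (\<Sum>z\<in>A'. length z) < (\<Sum>z\<in>A. length z) \<Longrightarrow>
      Qf A' lam' (cayley_dist FP TT) \<le> 0 \<and> ((\<exists>z. lam' z \<noteq> 0) \<longrightarrow> Qf A' lam' (cayley_dist FP TT) < 0)"
  shows "Qf A lam (cayley_dist FP TT) \<le> 0 \<and> ((\<exists>z. lam z \<noteq> 0) \<longrightarrow> Qf A lam (cayley_dist FP TT) < 0)"
proof -
  let ?K = "cayley_dist FP TT"
  let ?e = "\<lambda>c. x' @ fp_inl G c"
  have xr: "fp_reduced G H x" using xA Ac by auto
  have x'r: "fp_reduced G H x'" and nx': "notl x'" and ac: "a \<in> carrier G" "a \<noteq> \<one>\<^bsub>G\<^esub>"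
    using xr unfolding xl by (auto simp: fp_reduced_append fp_reduced_Cons notl_def)
  define L where "L = A \<inter> ?e ` (carrier G - {\<one>\<^bsub>G\<^esub>})"
  define CL where "CL = {c \<in> carrier G - {\<one>\<^bsub>G\<^esub>}. ?e c \<in> A}"
  define M where "M = (\<Sum>y\<in>L. lam y)"
  define A0 where "A0 = A - L"
  define f0 where "f0 = (\<lambda>z. if z \<in> A0 then lam z else 0)"
  define mu where "mu = (\<lambda>c. if c = \<one>\<^bsub>G\<^esub> then - M else if c \<in> CL then lam (?e c) else 0)"
  have inj: "inj_on ?e (carrier G)" by (rule inj_onI) simp
  have e1: "?e \<one>\<^bsub>G\<^esub> = x'" by simp
  have notBr: "\<And>z. z \<in> A \<Longrightarrow> z \<notin> ?e ` (carrier G - {\<one>\<^bsub>G\<^esub>}) \<Longrightarrow> \<not> Br_L x' z"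
  proof
    fix z assume zA: "z \<in> A" and zn: "z \<notin> ?e ` (carrier G - {\<one>\<^bsub>G\<^esub>})" and "Br_L x' z"
    then obtain c r where z: "z = x' @ Inl c # r" by (auto simp: Br_L_def)
    have "length z \<le> length x" using xmax zA by blast
    then have r: "r = []" using z xl by simp
    have "fp_reduced G H z" using zA Ac by auto
    then have c: "c \<in> carrier G" "c \<noteq> \<one>\<^bsub>G\<^esub>" using z by (auto simp: fp_reduced_append fp_reduced_Cons)
    then have "z = ?e c" using z r by (simp add: fp_inl_def)
    then have "z \<in> ?e ` (carrier G - {\<one>\<^bsub>G\<^esub>})" using c by blast
    then show False using zn by blast
  qed
  have dM: "\<And>c c'. c \<in> carrier G \<Longrightarrow> c' \<in> carrier G \<Longrightarrow> ?K (?e c) (?e c') = cayley_dist G S1 c c'"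
    using dist_emb_L[OF x'r nx'] by blast
  have dC1: "\<And>c z. c \<in> carrier G \<Longrightarrow> c \<noteq> \<one>\<^bsub>G\<^esub> \<Longrightarrow> z \<in> A \<Longrightarrow> z \<notin> ?e ` (carrier G - {\<one>\<^bsub>G\<^esub>}) \<Longrightarrow>
      ?K (?e c) z = cayley_dist G S1 c \<one>\<^bsub>G\<^esub> + ?K x' z"
  proof -
    fix c z assume c: "c \<in> carrier G" "c \<noteq> \<one>\<^bsub>G\<^esub>" and z: "z \<in> A" "z \<notin> ?e ` (carrier G - {\<one>\<^bsub>G\<^esub>})"
    have zr: "fp_reduced G H z" using z Ac by auto
    from dist_cut_L[OF x'r nx' c zr notBr[OF z]]
    show "?K (?e c) z = cayley_dist G S1 c \<one>\<^bsub>G\<^esub> + ?K x' z" using c by (simp add: fp_inl_def)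
  qed
  have dC2: "\<And>c z. c \<in> carrier G \<Longrightarrow> c \<noteq> \<one>\<^bsub>G\<^esub> \<Longrightarrow> z \<in> A \<Longrightarrow> z \<notin> ?e ` (carrier G - {\<one>\<^bsub>G\<^esub>}) \<Longrightarrow>
      ?K z (?e c) = ?K z x' + cayley_dist G S1 \<one>\<^bsub>G\<^esub> c"
  proof -
    fix c z assume c: "c \<in> carrier G" "c \<noteq> \<one>\<^bsub>G\<^esub>" and z: "z \<in> A" "z \<notin> ?e ` (carrier G - {\<one>\<^bsub>G\<^esub>})"
    have zr: "z \<in> carrier FP" using z Ac by auto
    have er: "?e c \<in> carrier FP" using red_inl[OF x'r nx' c(1)] by simp
    have xr': "x' \<in> carrier FP" using x'r by simp
    have "?K z (?e c) = ?K (?e c) z" using dist_sym[OF zr er] .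
    also have "\<dots> = cayley_dist G S1 c \<one>\<^bsub>G\<^esub> + ?K x' z" by (rule dC1[OF c z])
    also have "cayley_dist G S1 c \<one>\<^bsub>G\<^esub> = cayley_dist G S1 \<one>\<^bsub>G\<^esub> c" using dist_sym[OF c(1) oneG] .
    also have "?K x' z = ?K z x'" using dist_sym[OF xr' zr] .
    finally show "?K z (?e c) = ?K z x' + cayley_dist G S1 \<one>\<^bsub>G\<^esub> c" by simp
  qed
  have K00: "?K x' x' = 0" by (rule dist_self)
  have KM00: "cayley_dist G S1 \<one>\<^bsub>G\<^esub> \<one>\<^bsub>G\<^esub> = 0" by (rule dist_self)
  have eq: "Qf A lam ?K = Qf (insert \<one>\<^bsub>G\<^esub> CL) mu (cayley_dist G S1) + Qf (insert x' A0) (f0(x' := f0 x' + M)) ?K"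
    by (rule step_identity[OF finA lz sum0 oneG inj e1 dM dC1 dC2 K00 KM00 L_def CL_def M_def A0_def f0_def mu_def])
  note sf = step_facts[OF finA lz sum0 oneG inj e1 L_def CL_def M_def A0_def f0_def mu_def]
  have QC: "Qf (insert \<one>\<^bsub>G\<^esub> CL) mu (cayley_dist G S1) \<le> 0 \<and>
     ((\<exists>c. mu c \<noteq> 0) \<longrightarrow> Qf (insert \<one>\<^bsub>G\<^esub> CL) mu (cayley_dist G S1) < 0)"
    by (rule csnd_use[OF hyp sf(1) sf(2) sf(3) sf(4)])
  have Lsub: "L \<subseteq> A" unfolding L_def by blast
  have finL: "finite L" using finA Lsub finite_subset by blast
  have finA0: "finite A0" unfolding A0_def using finA by simp
  have A'c: "insert x' A0 \<subseteq> carrier FP" using Ac x'r unfolding A0_def by auto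
  have xL: "x \<in> L"
  proof -
    have "x = ?e a" using xl ac by (simp add: fp_inl_def)
    then show ?thesis unfolding L_def using xA ac by blast
  qed
  have lenlt: "(\<Sum>z\<in>insert x' A0. length z) < (\<Sum>z\<in>A. length z)"
  proof -
    have "(\<Sum>z\<in>insert x' A0. length z) \<le> length x' + (\<Sum>z\<in>A0. length z)"
      using finA0 by (cases "x' \<in> A0") (simp_all add: insert_absorb)
    moreover have "(\<Sum>z\<in>A. length z) = (\<Sum>z\<in>L. length z) + (\<Sum>z\<in>A0. length z)"
      unfolding A0_def by (rule sum_split[OF finA Lsub])
    moreover have "length x \<le> (\<Sum>z\<in>L. length z)" using member_le_sum[OF xL _ finL, of length] by simp
    moreover have "length x = length x' + 1" using xl by simp
    ultimately show ?thesis by linarith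
  qed
  have QA': "Qf (insert x' A0) (f0(x' := f0 x' + M)) ?K \<le> 0 \<and>
     ((\<exists>z. (f0(x' := f0 x' + M)) z \<noteq> 0) \<longrightarrow> Qf (insert x' A0) (f0(x' := f0 x' + M)) ?K < 0)"
    by (rule IH[OF sf(5) A'c sf(6) sf(7) lenlt])
  show ?thesis
  proof
    show "Qf A lam ?K \<le> 0" unfolding eq using QC QA' by (simp add: add_nonpos_nonpos)
    show "(\<exists>z. lam z \<noteq> 0) \<longrightarrow> Qf A lam ?K < 0"
    proof
      assume "\<exists>z. lam z \<noteq> 0"
      from sf(8)[OF this] show "Qf A lam ?K < 0"
      proof
        assume "\<exists>c. mu c \<noteq> 0"
        then show ?thesis unfolding eq using QC QA' by (simp add: add_neg_nonpos)
      next
        assume "\<exists>z. (f0(x' := f0 x' + M)) z \<noteq> 0"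
        then show ?thesis unfolding eq using QC QA' by (simp add: add_nonpos_neg)
      qed
    qed
  qed
qed

lemma side_step_R:
  assumes hyp: "cond_strict_neg_def (carrier H) (cayley_dist H S2)"
    and finA: "finite A" and Ac: "A \<subseteq> carrier FP" and lz: "\<forall>z. z \<notin> A \<longrightarrow> lam z = 0"
    and sum0: "(\<Sum>z\<in>A. lam z) = 0"
    and xA: "x \<in> A" and xmax: "\<forall>z\<in>A. length z \<le> length x" and xl: "x = x' @ [Inr a]"
    and IH: "\<And>A' lam'. finite A' \<Longrightarrow> A' \<subseteq> carrier FP \<Longrightarrow> \<forall>z. z \<notin> A' \<longrightarrow> lam' z = 0 \<Longrightarrow>
      (\<Sum>z\<in>A'. lam' z) = 0 \<Longrightarrow> (\<Sum>z\<in>A'. length z) < (\<Sum>z\<in>A. length z) \<Longrightarrow>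
      Qf A' lam' (cayley_dist FP TT) \<le> 0 \<and> ((\<exists>z. lam' z \<noteq> 0) \<longrightarrow> Qf A' lam' (cayley_dist FP TT) < 0)"
  shows "Qf A lam (cayley_dist FP TT) \<le> 0 \<and> ((\<exists>z. lam z \<noteq> 0) \<longrightarrow> Qf A lam (cayley_dist FP TT) < 0)"
proof -
  let ?K = "cayley_dist FP TT"
  let ?e = "\<lambda>c. x' @ fp_inr H c"
  have xr: "fp_reduced G H x" using xA Ac by auto
  have x'r: "fp_reduced G H x'" and nx': "notr x'" and ac: "a \<in> carrier H" "a \<noteq> \<one>\<^bsub>H\<^esub>"
    using xr unfolding xl by (auto simp: fp_reduced_append fp_reduced_Cons notr_def)
  define L where "L = A \<inter> ?e ` (carrier H - {\<one>\<^bsub>H\<^esub>})"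
  define CL where "CL = {c \<in> carrier H - {\<one>\<^bsub>H\<^esub>}. ?e c \<in> A}"
  define M where "M = (\<Sum>y\<in>L. lam y)"
  define A0 where "A0 = A - L"
  define f0 where "f0 = (\<lambda>z. if z \<in> A0 then lam z else 0)"
  define mu where "mu = (\<lambda>c. if c = \<one>\<^bsub>H\<^esub> then - M else if c \<in> CL then lam (?e c) else 0)"
  have inj: "inj_on ?e (carrier H)" by (rule inj_onI) simp
  have e1: "?e \<one>\<^bsub>H\<^esub> = x'" by simp
  have notBr: "\<And>z. z \<in> A \<Longrightarrow> z \<notin> ?e ` (carrier H - {\<one>\<^bsub>H\<^esub>}) \<Longrightarrow> \<not> Br_R x' z"
  proof
    fix z assume zA: "z \<in> A" and zn: "z \<notin> ?e ` (carrier H - {\<one>\<^bsub>H\<^esub>})" and "Br_R x' z"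
    then obtain c r where z: "z = x' @ Inr c # r" by (auto simp: Br_R_def)
    have "length z \<le> length x" using xmax zA by blast
    then have r: "r = []" using z xl by simp
    have "fp_reduced G H z" using zA Ac by auto
    then have c: "c \<in> carrier H" "c \<noteq> \<one>\<^bsub>H\<^esub>" using z by (auto simp: fp_reduced_append fp_reduced_Cons)
    then have "z = ?e c" using z r by (simp add: fp_inr_def)
    then have "z \<in> ?e ` (carrier H - {\<one>\<^bsub>H\<^esub>})" using c by blast
    then show False using zn by blast
  qed
  have dM: "\<And>c c'. c \<in> carrier H \<Longrightarrow> c' \<in> carrier H \<Longrightarrow> ?K (?e c) (?e c') = cayley_dist H S2 c c'"
    using dist_emb_R[OF x'r nx'] by blast
  have dC1: "\<And>c z. c \<in> carrier H \<Longrightarrow> c \<noteq> \<one>\<^bsub>H\<^esub> \<Longrightarrow> z \<in> A \<Longrightarrow> z \<notin> ?e ` (carrier H - {\<one>\<^bsub>H\<^esub>}) \<Longrightarrow>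
      ?K (?e c) z = cayley_dist H S2 c \<one>\<^bsub>H\<^esub> + ?K x' z"
  proof -
    fix c z assume c: "c \<in> carrier H" "c \<noteq> \<one>\<^bsub>H\<^esub>" and z: "z \<in> A" "z \<notin> ?e ` (carrier H - {\<one>\<^bsub>H\<^esub>})"
    have zr: "fp_reduced G H z" using z Ac by auto
    from dist_cut_R[OF x'r nx' c zr notBr[OF z]]
    show "?K (?e c) z = cayley_dist H S2 c \<one>\<^bsub>H\<^esub> + ?K x' z" using c by (simp add: fp_inr_def)
  qed
  have dC2: "\<And>c z. c \<in> carrier H \<Longrightarrow> c \<noteq> \<one>\<^bsub>H\<^esub> \<Longrightarrow> z \<in> A \<Longrightarrow> z \<notin> ?e ` (carrier H - {\<one>\<^bsub>H\<^esub>}) \<Longrightarrow>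
      ?K z (?e c) = ?K z x' + cayley_dist H S2 \<one>\<^bsub>H\<^esub> c"
  proof -
    fix c z assume c: "c \<in> carrier H" "c \<noteq> \<one>\<^bsub>H\<^esub>" and z: "z \<in> A" "z \<notin> ?e ` (carrier H - {\<one>\<^bsub>H\<^esub>})"
    have zr: "z \<in> carrier FP" using z Ac by auto
    have er: "?e c \<in> carrier FP" using red_inr[OF x'r nx' c(1)] by simp
    have xr': "x' \<in> carrier FP" using x'r by simp
    have "?K z (?e c) = ?K (?e c) z" using dist_sym[OF zr er] .
    also have "\<dots> = cayley_dist H S2 c \<one>\<^bsub>H\<^esub> + ?K x' z" by (rule dC1[OF c z])
    also have "cayley_dist H S2 c \<one>\<^bsub>H\<^esub> = cayley_dist H S2 \<one>\<^bsub>H\<^esub> c" using dist_sym[OF c(1) oneH] .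
    also have "?K x' z = ?K z x'" using dist_sym[OF xr' zr] .
    finally show "?K z (?e c) = ?K z x' + cayley_dist H S2 \<one>\<^bsub>H\<^esub> c" by simp
  qed
  have K00: "?K x' x' = 0" by (rule dist_self)
  have KM00: "cayley_dist H S2 \<one>\<^bsub>H\<^esub> \<one>\<^bsub>H\<^esub> = 0" by (rule dist_self)
  have eq: "Qf A lam ?K = Qf (insert \<one>\<^bsub>H\<^esub> CL) mu (cayley_dist H S2) + Qf (insert x' A0) (f0(x' := f0 x' + M)) ?K"
    by (rule step_identity[OF finA lz sum0 oneH inj e1 dM dC1 dC2 K00 KM00 L_def CL_def M_def A0_def f0_def mu_def])
  note sf = step_facts[OF finA lz sum0 oneH inj e1 L_def CL_def M_def A0_def f0_def mu_def]
  have QC: "Qf (insert \<one>\<^bsub>H\<^esub> CL) mu (cayley_dist H S2) \<le> 0 \<and>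
     ((\<exists>c. mu c \<noteq> 0) \<longrightarrow> Qf (insert \<one>\<^bsub>H\<^esub> CL) mu (cayley_dist H S2) < 0)"
    by (rule csnd_use[OF hyp sf(1) sf(2) sf(3) sf(4)])
  have Lsub: "L \<subseteq> A" unfolding L_def by blast
  have finL: "finite L" using finA Lsub finite_subset by blast
  have finA0: "finite A0" unfolding A0_def using finA by simp
  have A'c: "insert x' A0 \<subseteq> carrier FP" using Ac x'r unfolding A0_def by auto
  have xL: "x \<in> L"
  proof -
    have "x = ?e a" using xl ac by (simp add: fp_inr_def)
    then show ?thesis unfolding L_def using xA ac by blast
  qed
  have lenlt: "(\<Sum>z\<in>insert x' A0. length z) < (\<Sum>z\<in>A. length z)"
  proof -
    have "(\<Sum>z\<in>insert x' A0. length z) \<le> length x' + (\<Sum>z\<in>A0. length z)"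
      using finA0 by (cases "x' \<in> A0") (simp_all add: insert_absorb)
    moreover have "(\<Sum>z\<in>A. length z) = (\<Sum>z\<in>L. length z) + (\<Sum>z\<in>A0. length z)"
      unfolding A0_def by (rule sum_split[OF finA Lsub])
    moreover have "length x \<le> (\<Sum>z\<in>L. length z)" using member_le_sum[OF xL _ finL, of length] by simp
    moreover have "length x = length x' + 1" using xl by simp
    ultimately show ?thesis by linarith
  qed
  have QA': "Qf (insert x' A0) (f0(x' := f0 x' + M)) ?K \<le> 0 \<and>
     ((\<exists>z. (f0(x' := f0 x' + M)) z \<noteq> 0) \<longrightarrow> Qf (insert x' A0) (f0(x' := f0 x' + M)) ?K < 0)"
    by (rule IH[OF sf(5) A'c sf(6) sf(7) lenlt])
  show ?thesis
  proof
    show "Qf A lam ?K \<le> 0" unfolding eq using QC QA' by (simp add: add_nonpos_nonpos)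
    show "(\<exists>z. lam z \<noteq> 0) \<longrightarrow> Qf A lam ?K < 0"
    proof
      assume "\<exists>z. lam z \<noteq> 0"
      from sf(8)[OF this] show "Qf A lam ?K < 0"
      proof
        assume "\<exists>c. mu c \<noteq> 0"
        then show ?thesis unfolding eq using QC QA' by (simp add: add_neg_nonpos)
      next
        assume "\<exists>z. (f0(x' := f0 x' + M)) z \<noteq> 0"
        then show ?thesis unfolding eq using QC QA' by (simp add: add_nonpos_neg)
      qed
    qed
  qed
qed

lemma main_claim:
  assumes hG: "cond_strict_neg_def (carrier G) (cayley_dist G S1)"
    and hH: "cond_strict_neg_def (carrier H) (cayley_dist H S2)"
  shows "finite A \<Longrightarrow> A \<subseteq> carrier FP \<Longrightarrow> \<forall>z. z \<notin> A \<longrightarrow> lam z = 0 \<Longrightarrow> (\<Sum>z\<in>A. lam z) = 0 \<Longrightarrow>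
    Qf A lam (cayley_dist FP TT) \<le> 0 \<and> ((\<exists>z. lam z \<noteq> 0) \<longrightarrow> Qf A lam (cayley_dist FP TT) < 0)"
proof (induction "\<Sum>z\<in>A. length z" arbitrary: A lam rule: less_induct)
  case less
  have IH: "\<And>A' lam'. finite A' \<Longrightarrow> A' \<subseteq> carrier FP \<Longrightarrow> \<forall>z. z \<notin> A' \<longrightarrow> lam' z = 0 \<Longrightarrow>
      (\<Sum>z\<in>A'. lam' z) = 0 \<Longrightarrow> (\<Sum>z\<in>A'. length z) < (\<Sum>z\<in>A. length z) \<Longrightarrow>
      Qf A' lam' (cayley_dist FP TT) \<le> 0 \<and> ((\<exists>z. lam' z \<noteq> 0) \<longrightarrow> Qf A' lam' (cayley_dist FP TT) < 0)"
    using less.hyps by blast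
  show ?case
  proof (cases "\<forall>z\<in>A. z = []")
    case True
    have lz: "\<forall>z. lam z = 0"
    proof
      fix z show "lam z = 0"
      proof (cases "z \<in> A")
        case False then show ?thesis using less.prems(3) by blast
      next
        case True
        then have "A = {[]}" "z = []" using \<open>\<forall>z\<in>A. z = []\<close> by auto
        then show ?thesis using less.prems(4) by simp
      qed
    qed
    then have "Qf A lam (cayley_dist FP TT) = 0" unfolding Qf_def by simp
    then show ?thesis using lz by simp
  next
    case False
    then have ne: "A \<noteq> {}" by blast
    have fl: "finite (length ` A)" using less.prems(1) by simp
    have "Max (length ` A) \<in> length ` A" using Max_in[OF fl] ne by simp
    then obtain x where xA: "x \<in> A" and xm: "length x = Max (length ` A)" by (metis imageE)
    have xmax: "\<forall>z\<in>A. length z \<le> length x" using Max_ge[OF fl] xm by auto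
    have "x \<noteq> []" using False xmax by auto
    then obtain x' l where xl: "x = x' @ [l]" by (metis rev_exhaust)
    show ?thesis
    proof (cases l)
      case (Inl a)
      show ?thesis
        by (rule side_step_L[OF hG less.prems xA xmax xl[unfolded Inl] IH])
    next
      case (Inr a)
      show ?thesis
        by (rule side_step_R[OF hH less.prems xA xmax xl[unfolded Inr] IH])
    qed
  qed
qed

end

theorem mainTheorem10:
  fixes G :: "'a monoid" and H :: "'b monoid" and S1 :: "'a set" and S2 :: "'b set"
  assumes "group G" and "group H"
    and "S1 \<subseteq> carrier G" and "S2 \<subseteq> carrier H"
    and "generate G S1 = carrier G" and "generate H S2 = carrier H"
    and "cond_strict_neg_def (carrier G) (cayley_dist G S1)"
    and "cond_strict_neg_def (carrier H) (cayley_dist H S2)"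
  shows "cond_strict_neg_def (carrier (free_product G H))
           (cayley_dist (free_product G H) (fp_inl G ` S1 \<union> fp_inr H ` S2))"
proof -
  interpret fpc G H S1 S2 by (rule fpc.intro[OF assms(1-6)])
  show ?thesis unfolding cond_strict_neg_def_def
  proof (intro allI impI)
    fix lam :: "('a + 'b) list \<Rightarrow> complex"
    assume a: "finite {x. lam x \<noteq> 0} \<and> {x. lam x \<noteq> 0} \<subseteq> carrier (free_product G H) \<and>
      (\<exists>x. lam x \<noteq> 0) \<and> (\<Sum>x\<in>{x. lam x \<noteq> 0}. lam x) = 0"
    have lz: "\<forall>z. z \<notin> {x. lam x \<noteq> 0} \<longrightarrow> lam z = 0" by simp
    have "Qf {x. lam x \<noteq> 0} lam (cayley_dist FP TT) < 0"
      using main_claim[OF assms(7,8), of "{x. lam x \<noteq> 0}" lam] a lz by blast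
    then show "(\<Sum>x\<in>{x. lam x \<noteq> 0}. \<Sum>y\<in>{x. lam x \<noteq> 0}. lam x * cnj (lam y) *
        complex_of_real (cayley_dist (free_product G H) (fp_inl G ` S1 \<union> fp_inr H ` S2) x y)) < 0"
      unfolding Qf_def gens_def .
  qed
qed


end
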